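(* For every integer $n\ge1$, $\phi(\xi_n)=t^n$, where $\xi_n=\sum_{a=1}^n\binom{n}{a}p_{a,0}$.
   Context: $p_{a,b}=\sum_{i\in\mathbb{Z}}x_i^ax_{-i}^b$ in commuting variables $x_i$, $i\in\mathbb{Z}$. A signed graph is a finite graph (loops and multiple edges allowed) with $\mathrm{sgn}:E\to\{+,-\}$; a coloring $\kappa:V\to\mathbb{Z}$ is proper if $\kappa(u)\ne\mathrm{sgn}(e)\kappa(v)$ for every edge $e$ with endpoints $u,v$. An orientation assigns to each half-edge (a loop has two) an arrow toward or away from the vertex, such that on a positive edge exactly one of the two arrows points toward its vertex and on a negative edge both point toward or both point away. A cycle is a closed walk in which, considering only the edges of the walk, every vertex of the walk has at least one arrow pointing into it and one pointing out of it; an orientation is acyclic if it has no cycle; a sink is a vertex all of whose incident arrows point toward it (an isolated vertex is a sink). A signed poset is an acyclic orientation $P$ of a signed graph. A proper coloring $\kappa$ preserves $P$ if for every edge $e$ and each endpoint $v$ of $e$, with $u$ the other endpoint ($u=v$ for a loop), the arrow of $P$ at the incidence of $e$ with $v$ points toward $v$ iff $\kappa(v)>\mathrm{sgn}(e)\kappa(u)$. $Y_P=\sum_\kappa\prod_v x_{\kappa(v)}$ over proper colorings preserving $P$; $\mathbb{Y}$ is the $\mathbb{Q}$-span of all $Y_P$ (it is closed under products and contains $p_{a,b}$ for $a\ge1,b\ge0$). $\phi:\mathbb{Y}\to\mathbb{Q}[t]$ is the (unique) $\mathbb{Q}$-linear map with $\phi(Y_P)=t^{\mathrm{sink}(P)}$,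 $\mathrm{sink}(P)$ the number of sinks of $P$ (its existence is established in the paper). *)

theory Defs
  imports Main "HOL-Library.Multiset" "HOL-Library.FuncSet" "HOL-Computational_Algebra.Polynomial"
begin

text \<open>Each edge e has two half-edges: half-edge 1 at vertex fst (sends P e) and half-edge 2
  at vertex snd (sends P e) (equal for a loop). spos P e is True iff e is positive.
  sarr P e = (a,b): a (resp. b) is True iff the arrow at half-edge 1 (resp. 2) points
  toward its vertex.\<close>

record sposet =
  sverts :: "nat set"
  sedges :: "nat set"
  sends :: "nat \<Rightarrow> nat \<times> nat"
  spos :: "nat \<Rightarrow> bool"
  sarr :: "nat \<Rightarrow> bool \<times> bool"

definition sgnval :: "sposet \<Rightarrow> nat \<Rightarrow> int" where
  "sgnval P e = (if spos P e then 1 else -1)"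

definition is_oriented_signed_graph :: "sposet \<Rightarrow> bool" where
  "is_oriented_signed_graph P \<longleftrightarrow>
     finite (sverts P) \<and> finite (sedges P) \<and>
     (\<forall>e\<in>sedges P. fst (sends P e) \<in> sverts P \<and> snd (sends P e) \<in> sverts P) \<and>
     (\<forall>e\<in>sedges P. (spos P e \<longleftrightarrow> fst (sarr P e) \<noteq> snd (sarr P e)))"

definition closed_walk :: "sposet \<Rightarrow> nat list \<Rightarrow> nat list \<Rightarrow> bool" where
  "closed_walk P ws es \<longleftrightarrow>
     es \<noteq> [] \<and> length ws = length es + 1 \<and> hd ws = last ws \<and>
     (\<forall>j<length es. es!j \<in> sedges P \<and>
        (sends P (es!j) = (ws!j, ws!(j+1)) \<or> sends P (es!j) = (ws!(j+1), ws!j)))"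

definition has_in_arrow :: "sposet \<Rightarrow> nat set \<Rightarrow> nat \<Rightarrow> bool" where
  "has_in_arrow P S w \<longleftrightarrow> (\<exists>e\<in>S.
      (fst (sends P e) = w \<and> fst (sarr P e)) \<or> (snd (sends P e) = w \<and> snd (sarr P e)))"

definition has_out_arrow :: "sposet \<Rightarrow> nat set \<Rightarrow> nat \<Rightarrow> bool" where
  "has_out_arrow P S w \<longleftrightarrow> (\<exists>e\<in>S.
      (fst (sends P e) = w \<and> \<not> fst (sarr P e)) \<or> (snd (sends P e) = w \<and> \<not> snd (sarr P e)))"

definition is_cycle :: "sposet \<Rightarrow> nat list \<Rightarrow> nat list \<Rightarrow> bool" where
  "is_cycle P ws es \<longleftrightarrow> closed_walk P ws es \<and>
     (\<forall>w\<in>set ws. has_in_arrow P (set es) w \<and> has_out_arrow P (set es) w)"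

definition signed_poset :: "sposet \<Rightarrow> bool" where
  "signed_poset P \<longleftrightarrow> is_oriented_signed_graph P \<and> (\<nexists>ws es. is_cycle P ws es)"

definition is_sink :: "sposet \<Rightarrow> nat \<Rightarrow> bool" where
  "is_sink P v \<longleftrightarrow> v \<in> sverts P \<and>
     (\<forall>e\<in>sedges P. (fst (sends P e) = v \<longrightarrow> fst (sarr P e)) \<and>
                    (snd (sends P e) = v \<longrightarrow> snd (sarr P e)))"

definition nsinks :: "sposet \<Rightarrow> nat" where
  "nsinks P = card {v. is_sink P v}"

definition proper_col :: "sposet \<Rightarrow> (nat \<Rightarrow> int) \<Rightarrow> bool" where
  "proper_col P \<kappa> \<longleftrightarrow> (\<forall>e\<in>sedges P.
      \<kappa> (fst (sends P e)) \<noteq> sgnval P e * \<kappa> (snd (sends P e)))"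

definition preserves :: "sposet \<Rightarrow> (nat \<Rightarrow> int) \<Rightarrow> bool" where
  "preserves P \<kappa> \<longleftrightarrow> (\<forall>e\<in>sedges P.
      (fst (sarr P e) \<longleftrightarrow> \<kappa> (fst (sends P e)) > sgnval P e * \<kappa> (snd (sends P e))) \<and>
      (snd (sarr P e) \<longleftrightarrow> \<kappa> (snd (sends P e)) > sgnval P e * \<kappa> (fst (sends P e))))"

text \<open>Formal power series in the variables x_i (i :: int) are represented by their
  coefficient functions on monomials; a monomial is a finite multiset of indices.\<close>
type_synonym fps_Z = "int multiset \<Rightarrow> rat"

definition Ycoeff :: "sposet \<Rightarrow> fps_Z" where
  "Ycoeff P m = of_nat (card {\<kappa> \<in> sverts P \<rightarrow>\<^sub>E (UNIV :: int set).
      proper_col P \<kappa> \<and> preserves P \<kappa> \<and> image_mset \<kappa> (mset_set (sverts P)) = m})"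

text \<open>p_{a,b} = sum over i of x_i^a x_{-i}^b.\<close>
definition pab :: "nat \<Rightarrow> nat \<Rightarrow> fps_Z" where
  "pab a b m = of_nat (card {i :: int. m = replicate_mset a i + replicate_mset b (- i)})"

definition xi :: "nat \<Rightarrow> fps_Z" where
  "xi n = (\<lambda>m. \<Sum>a = 1..n. of_nat (n choose a) * pab a 0 m)"

definition lincomb_Y :: "(rat \<times> sposet) list \<Rightarrow> fps_Z" where
  "lincomb_Y L = (\<lambda>m. \<Sum>(c, P) \<leftarrow> L. c * Ycoeff P m)"

definition phi_of :: "(rat \<times> sposet) list \<Rightarrow> rat poly" where
  "phi_of L = (\<Sum>(c, P) \<leftarrow> L. smult c (monom 1 (nsinks P)))"

end

theory Submission
  imports Defs
begin

definition good :: "sposet \<Rightarrow> (nat \<Rightarrow> int) \<Rightarrow> bool" where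
  "good P k \<longleftrightarrow> proper_col P k \<and> preserves P k"

definition is_source :: "sposet \<Rightarrow> nat \<Rightarrow> bool" where
  "is_source P v \<longleftrightarrow> v \<in> sverts P \<and>
     (\<forall>e\<in>sedges P. (fst (sends P e) = v \<longrightarrow> \<not> fst (sarr P e)) \<and>
                    (snd (sends P e) = v \<longrightarrow> \<not> snd (sarr P e)))"

definition levels :: "sposet \<Rightarrow> (nat \<Rightarrow> int) \<Rightarrow> int set" where
  "levels P k = (abs ` k ` sverts P) - {0}"

definition CK :: "nat \<Rightarrow> sposet \<Rightarrow> (nat \<Rightarrow> int) set" where
  "CK K P = {k \<in> sverts P \<rightarrow>\<^sub>E UNIV. good P k \<and> levels P k = {1..int K}}"

definition pairs :: "sposet \<Rightarrow> (nat set \<times> nat set) set" where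
  "pairs P = {AB. fst AB \<subseteq> {v. is_sink P v} \<and> snd AB \<subseteq> {v. is_source P v}
       \<and> fst AB \<inter> snd AB = {} \<and> fst AB \<union> snd AB \<noteq> {}}"

definition rest :: "sposet \<Rightarrow> nat set \<Rightarrow> sposet" where
  "rest P S = P\<lparr>sverts := sverts P - S,
      sedges := {e \<in> sedges P. fst (sends P e) \<notin> S \<and> snd (sends P e) \<notin> S}\<rparr>"

definition extc :: "nat set \<Rightarrow> nat set \<Rightarrow> int \<Rightarrow> (nat \<Rightarrow> int) \<Rightarrow> nat \<Rightarrow> int" where
  "extc A B L k = (\<lambda>v. if v \<in> A then L else if v \<in> B then - L else k v)"

lemma rest_simps [simp]:
  "sverts (rest P S) = sverts P - S"
  "sedges (rest P S) = {e \<in> sedges P. fst (sends P e) \<notin> S \<and> snd (sends P e) \<notin> S}"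
  "sends (rest P S) = sends P" "spos (rest P S) = spos P" "sarr (rest P S) = sarr P"
  by (simp_all add: rest_def)

lemma sgnval_rest [simp]: "sgnval (rest P S) = sgnval P"
  by (simp add: sgnval_def fun_eq_iff)

lemma CK_bound:
  assumes "k \<in> CK K P" "v \<in> sverts P"
  shows "\<bar>k v\<bar> \<le> int K"
proof (cases "k v = 0")
  case False
  then have "\<bar>k v\<bar> \<in> levels P k" using assms(2) by (auto simp: levels_def)
  then show ?thesis using assms(1) by (auto simp: CK_def)
qed simp

lemma edge_lemma:
  fixes x y L s :: int
  assumes "p \<longleftrightarrow> a1 \<noteq> a2" "s = (if p then 1 else -1)" "0 < L"
    "xA \<Longrightarrow> x = L \<and> a1" "xB \<Longrightarrow> x = -L \<and> \<not>a1" "\<not>xA \<Longrightarrow> \<not>xB \<Longrightarrow> \<bar>x\<bar> < L"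
    "yA \<Longrightarrow> y = L \<and> a2" "yB \<Longrightarrow> y = -L \<and> \<not> a2" "\<not>yA \<Longrightarrow> \<not>yB \<Longrightarrow> \<bar>y\<bar> < L"
    "\<not>xA \<Longrightarrow> \<not>xB \<Longrightarrow> \<not>yA \<Longrightarrow> \<not>yB \<Longrightarrow> x \<noteq> s*y \<and> (a1 \<longleftrightarrow> x > s*y) \<and> (a2 \<longleftrightarrow> y > s*x)"
  shows "x \<noteq> s*y \<and> (a1 \<longleftrightarrow> x > s*y) \<and> (a2 \<longleftrightarrow> y > s*x)"
proof (cases p)
  case True
  then have s: "s = 1" using assms(2) by simp
  show ?thesis using assms(1,3-10) True unfolding s by (smt (verit))
next
  case False
  then have s: "s = -1" using assms(2) by simp
  show ?thesis using assms(1,3-10) False unfolding s by (smt (verit))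
qed

lemma sgnval_cases: "sgnval P e = 1 \<or> sgnval P e = -1"
  by (simp add: sgnval_def)

lemma top_sink:
  assumes or: "is_oriented_signed_graph P" and k: "k \<in> CK (Suc K) P"
    and v: "v \<in> sverts P" "k v = int K + 1"
  shows "is_sink P v"
  unfolding is_sink_def
proof (rule conjI[OF v(1)], rule ballI)
  fix e assume e: "e \<in> sedges P"
  let ?u = "fst (sends P e)" and ?w = "snd (sends P e)"
  have uw: "?u \<in> sverts P" "?w \<in> sverts P" using or e by (auto simp: is_oriented_signed_graph_def)
  have bu: "\<bar>k ?u\<bar> \<le> int K + 1" and bw: "\<bar>k ?w\<bar> \<le> int K + 1"
    using CK_bound[OF k, of ?u] CK_bound[OF k, of ?w] uw by simp_all
  have g: "k ?u \<noteq> sgnval P e * k ?w" "fst (sarr P e) \<longleftrightarrow> k ?u > sgnval P e * k ?w"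
     "snd (sarr P e) \<longleftrightarrow> k ?w > sgnval P e * k ?u"
    using k e by (auto simp: CK_def good_def proper_col_def preserves_def)
  show "(?u = v \<longrightarrow> fst (sarr P e)) \<and> (?w = v \<longrightarrow> snd (sarr P e))"
    using g bu bw v(2) sgnval_cases[of P e] by auto
qed

lemma bot_source:
  assumes or: "is_oriented_signed_graph P" and k: "k \<in> CK (Suc K) P"
    and v: "v \<in> sverts P" "k v = - (int K + 1)"
  shows "is_source P v"
  unfolding is_source_def
proof (rule conjI[OF v(1)], rule ballI)
  fix e assume e: "e \<in> sedges P"
  let ?u = "fst (sends P e)" and ?w = "snd (sends P e)"
  have uw: "?u \<in> sverts P" "?w \<in> sverts P" using or e by (auto simp: is_oriented_signed_graph_def)
  have bu: "\<bar>k ?u\<bar> \<le> int K + 1" and bw: "\<bar>k ?w\<bar> \<le> int K + 1"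
    using CK_bound[OF k, of ?u] CK_bound[OF k, of ?w] uw by simp_all
  have g: "k ?u \<noteq> sgnval P e * k ?w" "fst (sarr P e) \<longleftrightarrow> k ?u > sgnval P e * k ?w"
     "snd (sarr P e) \<longleftrightarrow> k ?w > sgnval P e * k ?u"
    using k e by (auto simp: CK_def good_def proper_col_def preserves_def)
  show "(?u = v \<longrightarrow> \<not> fst (sarr P e)) \<and> (?w = v \<longrightarrow> \<not> snd (sarr P e))"
    using g bu bw v(2) sgnval_cases[of P e] by auto
qed

lemma sinks_sub: "{v. is_sink P v} \<subseteq> sverts P" by (auto simp: is_sink_def)
lemma sources_sub: "{v. is_source P v} \<subseteq> sverts P" by (auto simp: is_source_def)

lemma extc_in:
  assumes or: "is_oriented_signed_graph P" and AB: "(A, B) \<in> pairs P"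
    and k: "k \<in> CK K (rest P (A \<union> B))"
  shows "extc A B (int K + 1) k \<in> CK (Suc K) P"
proof -
  let ?S = "A \<union> B" and ?L = "int K + 1" and ?k = "extc A B (int K + 1) k"
  have A: "A \<subseteq> {v. is_sink P v}" and B: "B \<subseteq> {v. is_source P v}" and AB0: "A \<inter> B = {}"
    and ne: "A \<union> B \<noteq> {}" using AB by (auto simp: pairs_def)
  have AV: "A \<subseteq> sverts P" and BV: "B \<subseteq> sverts P" using A B sinks_sub sources_sub by blast+
  have kp: "k \<in> (sverts P - ?S) \<rightarrow>\<^sub>E UNIV" and kg: "good (rest P ?S) k"
    and kl: "levels (rest P ?S) k = {1..int K}" using k by (auto simp: CK_def)
  have kb: "v \<in> sverts P - ?S \<Longrightarrow> \<bar>k v\<bar> \<le> int K" for v using CK_bound[OF k] by auto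
  have pie: "?k \<in> sverts P \<rightarrow>\<^sub>E UNIV"
    using kp AV BV by (auto simp: extc_def PiE_def extensional_def)
  have gd: "good P ?k"
    unfolding good_def proper_col_def preserves_def
  proof (intro conjI ballI)
    fix e assume e: "e \<in> sedges P"
    let ?u = "fst (sends P e)" and ?w = "snd (sends P e)"
    have uw: "?u \<in> sverts P" "?w \<in> sverts P" using or e by (auto simp: is_oriented_signed_graph_def)
    have p: "spos P e \<longleftrightarrow> fst (sarr P e) \<noteq> snd (sarr P e)" using or e by (auto simp: is_oriented_signed_graph_def)
    have sinkA: "x \<in> A \<Longrightarrow> is_sink P x" for x using A by auto
    have srcB: "x \<in> B \<Longrightarrow> is_source P x" for x using B by auto
    have inner: "?u \<notin> ?S \<Longrightarrow> ?w \<notin> ?S \<Longrightarrow> ?k ?u \<noteq> sgnval P e * ?k ?w \<and>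
        (fst (sarr P e) \<longleftrightarrow> ?k ?u > sgnval P e * ?k ?w) \<and> (snd (sarr P e) \<longleftrightarrow> ?k ?w > sgnval P e * ?k ?u)"
    proof -
      assume "?u \<notin> ?S" "?w \<notin> ?S"
      then have "e \<in> sedges (rest P ?S)" using e by simp
      then show ?thesis using kg \<open>?u \<notin> ?S\<close> \<open>?w \<notin> ?S\<close>
        by (auto simp: good_def proper_col_def preserves_def extc_def)
    qed
    have all: "?k ?u \<noteq> sgnval P e * ?k ?w \<and>
        (fst (sarr P e) \<longleftrightarrow> ?k ?u > sgnval P e * ?k ?w) \<and> (snd (sarr P e) \<longleftrightarrow> ?k ?w > sgnval P e * ?k ?u)"
    proof (rule edge_lemma[where s="sgnval P e" and L="?L" and xA="?u \<in> A" and xB="?u \<in> B" and yA="?w \<in> A" and yB="?w \<in> B", OF p _ _ _ _ _ _ _ _ inner])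
      show "sgnval P e = (if spos P e then 1 else - 1)" by (simp add: sgnval_def)
      show "0 < ?L" by simp
      show "?u \<in> A \<Longrightarrow> ?k ?u = ?L \<and> fst (sarr P e)"
        using sinkA[of ?u] e by (auto simp: extc_def is_sink_def)
      show "?u \<in> B \<Longrightarrow> ?k ?u = - ?L \<and> \<not> fst (sarr P e)"
        using srcB[of ?u] e AB0 by (auto simp: extc_def is_source_def)
      show "?u \<notin> A \<Longrightarrow> ?u \<notin> B \<Longrightarrow> \<bar>?k ?u\<bar> < ?L"
        using kb[of ?u] uw by (auto simp: extc_def)
      show "?w \<in> A \<Longrightarrow> ?k ?w = ?L \<and> snd (sarr P e)"
        using sinkA[of ?w] e by (auto simp: extc_def is_sink_def)
      show "?w \<in> B \<Longrightarrow> ?k ?w = - ?L \<and> \<not> snd (sarr P e)"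
        using srcB[of ?w] e AB0 by (auto simp: extc_def is_source_def)
      show "?w \<notin> A \<Longrightarrow> ?w \<notin> B \<Longrightarrow> \<bar>?k ?w\<bar> < ?L"
        using kb[of ?w] uw by (auto simp: extc_def)
    qed auto
    then show "?k ?u \<noteq> sgnval P e * ?k ?w" "fst (sarr P e) = (?k ?u > sgnval P e * ?k ?w)"
      "snd (sarr P e) = (?k ?w > sgnval P e * ?k ?u)" by auto
  qed
  have lv: "levels P ?k = {1..int K + 1}"
  proof -
    have V: "sverts P = ?S \<union> (sverts P - ?S)" using AV BV by auto
    have i1': "\<And>v. v \<in> ?S \<Longrightarrow> abs (?k v) = ?L" by (auto simp: extc_def)
    have "abs ` ?k ` ?S = (\<lambda>_. ?L) ` ?S" unfolding image_image using i1' by (intro image_cong) auto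
    also have "\<dots> = {?L}" using ne by auto
    finally have i1: "abs ` ?k ` ?S = {?L}" .
    have i2: "abs ` ?k ` (sverts P - ?S) = abs ` k ` (sverts P - ?S)"
      by (auto simp: extc_def image_iff)
    have "levels P ?k = (abs ` ?k ` ?S \<union> abs ` ?k ` (sverts P - ?S)) - {0}"
      unfolding levels_def by (subst V) (simp only: image_Un)
    also have "\<dots> = {?L} \<union> levels (rest P ?S) k"
      unfolding i1 i2 levels_def by auto
    also have "\<dots> = {1..int K + 1}" using kl by auto
    finally show ?thesis .
  qed
  show ?thesis using pie gd lv by (simp add: CK_def)
qed

lemma CK_finite:
  assumes "finite (sverts P)" shows "finite (CK K P)"
proof (rule finite_subset[OF _ finite_PiE[OF assms]])
  show "CK K P \<subseteq> PiE (sverts P) (\<lambda>_. {- int K..int K})"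
  proof
    fix k assume k: "k \<in> CK K P"
    show "k \<in> PiE (sverts P) (\<lambda>_. {- int K..int K})"
      unfolding PiE_iff
    proof (intro conjI ballI)
      fix i assume "i \<in> sverts P"
      then show "k i \<in> {- int K..int K}" using CK_bound[OF k, of i] by (simp add: abs_le_iff)
    next
      show "k \<in> extensional (sverts P)" using k by (simp add: CK_def PiE_iff)
    qed
  qed
qed auto

lemma extc_surj:
  assumes or: "is_oriented_signed_graph P" and k: "k \<in> CK (Suc K) P"
  defines "A \<equiv> {v \<in> sverts P. k v = int K + 1}" and "B \<equiv> {v \<in> sverts P. k v = - (int K + 1)}"
  shows "(A, B) \<in> pairs P" "restrict k (sverts P - (A \<union> B)) \<in> CK K (rest P (A \<union> B))"
    "k = extc A B (int K + 1) (restrict k (sverts P - (A \<union> B)))"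
proof -
  let ?S = "A \<union> B" and ?r = "restrict k (sverts P - (A \<union> B))"
  have kp: "k \<in> sverts P \<rightarrow>\<^sub>E UNIV" and kg: "good P k" and kl: "levels P k = {1..int K + 1}"
    using k by (auto simp: CK_def)
  have kb: "v \<in> sverts P \<Longrightarrow> \<bar>k v\<bar> \<le> int K + 1" for v using CK_bound[OF k, of v] by simp
  have S: "v \<in> ?S \<longleftrightarrow> v \<in> sverts P \<and> \<bar>k v\<bar> = int K + 1" for v
    unfolding A_def B_def by auto
  have "int K + 1 \<in> levels P k" using kl by simp
  then obtain v where v: "v \<in> sverts P" "\<bar>k v\<bar> = int K + 1" by (auto simp: levels_def)
  show "(A, B) \<in> pairs P"
    unfolding pairs_def mem_Collect_eq fst_conv snd_conv
  proof (intro conjI)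
    show "A \<subseteq> Collect (is_sink P)" using top_sink[OF or k] by (auto simp: A_def)
    show "B \<subseteq> Collect (is_source P)" using bot_source[OF or k] by (auto simp: B_def)
    show "A \<inter> B = {}" by (auto simp: A_def B_def)
    show "A \<union> B \<noteq> {}" using v S by blast
  qed
  have rp: "?r \<in> (sverts P - ?S) \<rightarrow>\<^sub>E UNIV" by simp
  have rg: "good (rest P ?S) ?r"
    unfolding good_def proper_col_def preserves_def
  proof (intro conjI ballI)
    fix e assume e: "e \<in> sedges (rest P ?S)"
    then have e': "e \<in> sedges P" "fst (sends P e) \<notin> ?S" "snd (sends P e) \<notin> ?S" by auto
    have uw: "fst (sends P e) \<in> sverts P" "snd (sends P e) \<in> sverts P"
      using or e'(1) by (auto simp: is_oriented_signed_graph_def)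
    have "k (fst (sends P e)) \<noteq> sgnval P e * k (snd (sends P e))"
      "fst (sarr P e) = (sgnval P e * k (snd (sends P e)) < k (fst (sends P e)))"
      "snd (sarr P e) = (sgnval P e * k (fst (sends P e)) < k (snd (sends P e)))"
      using kg e'(1) by (auto simp: good_def proper_col_def preserves_def)
    then show "?r (fst (sends (rest P ?S) e)) \<noteq> sgnval (rest P ?S) e * ?r (snd (sends (rest P ?S) e))"
      "fst (sarr (rest P ?S) e) = (sgnval (rest P ?S) e * ?r (snd (sends (rest P ?S) e)) < ?r (fst (sends (rest P ?S) e)))"
      "snd (sarr (rest P ?S) e) = (sgnval (rest P ?S) e * ?r (fst (sends (rest P ?S) e)) < ?r (snd (sends (rest P ?S) e)))"
      using e' uw by auto
  qed
  have rl: "levels (rest P ?S) ?r = {1..int K}"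
  proof
    show "levels (rest P ?S) ?r \<subseteq> {1..int K}"
    proof
      fix x assume "x \<in> levels (rest P ?S) ?r"
      then have x: "x \<in> abs ` ?r ` (sverts P - ?S)" "x \<noteq> 0" by (auto simp: levels_def)
      then obtain w where w0: "w \<in> sverts P - ?S" "x = \<bar>?r w\<bar>" by blast
      then have w: "w \<in> sverts P" "w \<notin> ?S" "x = \<bar>k w\<bar>" "x \<noteq> 0" using x(2) by auto
      then have "x \<in> levels P k" by (auto simp: levels_def)
      moreover have "\<bar>k w\<bar> \<noteq> int K + 1" using w S[of w] by auto
      ultimately show "x \<in> {1..int K}" using kl w by auto
    qed
  next
    show "{1..int K} \<subseteq> levels (rest P ?S) ?r"
    proof
      fix x assume x: "x \<in> {1..int K}"
      then have "x \<in> levels P k" using kl by auto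
      then obtain w where w: "w \<in> sverts P" "x = \<bar>k w\<bar>" by (auto simp: levels_def)
      then have "w \<notin> ?S" using S x by auto
      then show "x \<in> levels (rest P ?S) ?r" using w x by (auto simp: levels_def)
    qed
  qed
  show "?r \<in> CK K (rest P ?S)" using rp rg rl by (simp add: CK_def)
  show "k = extc A B (int K + 1) ?r"
  proof
    fix w show "k w = extc A B (int K + 1) ?r w"
      using kp by (cases "w \<in> sverts P") (auto simp: extc_def A_def B_def PiE_def extensional_def)
  qed
qed

lemma extc_inj: "inj_on (extc A B L) (CK K (rest P (A \<union> B)))"
proof (rule inj_onI)
  fix k1 k2 assume k: "k1 \<in> CK K (rest P (A \<union> B))" "k2 \<in> CK K (rest P (A \<union> B))"
    and eq: "extc A B L k1 = extc A B L k2"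
  show "k1 = k2"
  proof
    fix v show "k1 v = k2 v"
    proof (cases "v \<in> A \<union> B")
      case True
      then show ?thesis using k by (auto simp: CK_def PiE_def extensional_def)
    next
      case False
      then show ?thesis using fun_cong[OF eq, of v] by (auto simp: extc_def)
    qed
  qed
qed

lemma extc_recover:
  assumes AB: "(A, B) \<in> pairs P" and k: "k \<in> CK K (rest P (A \<union> B))"
  shows "{v \<in> sverts P. extc A B (int K + 1) k v = int K + 1} = A"
    "{v \<in> sverts P. extc A B (int K + 1) k v = - (int K + 1)} = B"
proof -
  have A0: "A \<subseteq> {v. is_sink P v}" and B0: "B \<subseteq> {v. is_source P v}" and AB0: "A \<inter> B = {}"
    using AB by (auto simp: pairs_def)
  have A: "A \<subseteq> sverts P" using A0 sinks_sub[of P] by blast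
  have B: "B \<subseteq> sverts P" using B0 sources_sub[of P] by blast
  have kb: "v \<in> sverts P \<Longrightarrow> v \<notin> A \<Longrightarrow> v \<notin> B \<Longrightarrow> \<bar>k v\<bar> \<le> int K" for v
    using CK_bound[OF k, of v] by simp
  show "{v \<in> sverts P. extc A B (int K + 1) k v = int K + 1} = A"
    using A AB0 kb by (force simp: extc_def)
  show "{v \<in> sverts P. extc A B (int K + 1) k v = - (int K + 1)} = B"
    using B AB0 kb by (force simp: extc_def)
qed

lemma CK_Suc_eq:
  assumes or: "is_oriented_signed_graph P"
  shows "CK (Suc K) P = (\<Union>AB\<in>pairs P. extc (fst AB) (snd AB) (int K + 1) ` CK K (rest P (fst AB \<union> snd AB)))"
proof
  show "CK (Suc K) P \<subseteq> (\<Union>AB\<in>pairs P. extc (fst AB) (snd AB) (int K + 1) ` CK K (rest P (fst AB \<union> snd AB)))"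
  proof
    fix k assume k: "k \<in> CK (Suc K) P"
    note s = extc_surj[OF or k]
    show "k \<in> (\<Union>AB\<in>pairs P. extc (fst AB) (snd AB) (int K + 1) ` CK K (rest P (fst AB \<union> snd AB)))"
      using s by (intro UN_I[OF s(1)]) auto
  qed
next
  show "(\<Union>AB\<in>pairs P. extc (fst AB) (snd AB) (int K + 1) ` CK K (rest P (fst AB \<union> snd AB))) \<subseteq> CK (Suc K) P"
    using extc_in[OF or] by fastforce
qed

lemma pairs_finite:
  assumes "finite (sverts P)" shows "finite (pairs P)"
proof (rule finite_subset[of _ "Pow (sverts P) \<times> Pow (sverts P)"])
  show "pairs P \<subseteq> Pow (sverts P) \<times> Pow (sverts P)"
  proof
    fix AB assume "AB \<in> pairs P"
    then have "fst AB \<subseteq> {v. is_sink P v}" "snd AB \<subseteq> {v. is_source P v}" by (auto simp: pairs_def)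
    then show "AB \<in> Pow (sverts P) \<times> Pow (sverts P)"
      using sinks_sub[of P] sources_sub[of P] by (auto simp: mem_Times_iff)
  qed
qed (use assms in auto)

lemma sum_CK_Suc:
  assumes or: "is_oriented_signed_graph P"
  shows "(\<Sum>k\<in>CK (Suc K) P. f k) =
    (\<Sum>AB\<in>pairs P. \<Sum>k\<in>CK K (rest P (fst AB \<union> snd AB)). f (extc (fst AB) (snd AB) (int K + 1) k))"
proof -
  have fin: "finite (sverts P)" using or by (simp add: is_oriented_signed_graph_def)
  have "(\<Sum>k\<in>CK (Suc K) P. f k) =
     (\<Sum>AB\<in>pairs P. \<Sum>k\<in>extc (fst AB) (snd AB) (int K + 1) ` CK K (rest P (fst AB \<union> snd AB)). f k)"
    unfolding CK_Suc_eq[OF or]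
  proof (rule sum.UNION_disjoint)
    show "finite (pairs P)" using pairs_finite[OF fin] .
    show "\<forall>AB\<in>pairs P. finite (extc (fst AB) (snd AB) (int K + 1) ` CK K (rest P (fst AB \<union> snd AB)))"
      using fin by (auto intro!: finite_imageI CK_finite)
    show "\<forall>i\<in>pairs P. \<forall>j\<in>pairs P. i \<noteq> j \<longrightarrow>
      extc (fst i) (snd i) (int K + 1) ` CK K (rest P (fst i \<union> snd i)) \<inter>
      extc (fst j) (snd j) (int K + 1) ` CK K (rest P (fst j \<union> snd j)) = {}"
    proof (intro ballI impI)
      fix i j assume i: "i \<in> pairs P" and j: "j \<in> pairs P" and ij: "i \<noteq> j"
      show "extc (fst i) (snd i) (int K + 1) ` CK K (rest P (fst i \<union> snd i)) \<inter>
        extc (fst j) (snd j) (int K + 1) ` CK K (rest P (fst j \<union> snd j)) = {}"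
      proof (rule ccontr)
        assume "\<not> ?thesis"
        then obtain k1 k2 where k1: "k1 \<in> CK K (rest P (fst i \<union> snd i))"
          and k2: "k2 \<in> CK K (rest P (fst j \<union> snd j))"
          and eq: "extc (fst i) (snd i) (int K + 1) k1 = extc (fst j) (snd j) (int K + 1) k2" by blast
        have i': "(fst i, snd i) \<in> pairs P" and j': "(fst j, snd j) \<in> pairs P" using i j by auto
        note r1 = extc_recover[OF i' k1] and r2 = extc_recover[OF j' k2]
        have "fst i = fst j" using r1(1) r2(1) eq by simp
        moreover have "snd i = snd j" using r1(2) r2(2) eq by simp
        ultimately show False using ij by (simp add: prod_eq_iff)
      qed
    qed
  qed
  also have "\<dots> = (\<Sum>AB\<in>pairs P. \<Sum>k\<in>CK K (rest P (fst AB \<union> snd AB)). f (extc (fst AB) (snd AB) (int K + 1) k))"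
    by (intro sum.cong refl sum.reindex[unfolded comp_def] extc_inj)
  finally show ?thesis .
qed

lemma sum_pow_card_Pow:
  fixes c :: "'a::comm_ring_1"
  assumes "finite S"
  shows "(\<Sum>T\<in>Pow S. c ^ card T) = (1 + c) ^ card S"
  using assms
proof (induction S rule: finite_induct)
  case empty
  then show ?case by simp
next
  case (insert a A)
  have fin: "finite (Pow A)" "finite (insert a ` Pow A)" using insert by auto
  have dis: "Pow A \<inter> insert a ` Pow A = {}" using insert by auto
  have inj: "inj_on (insert a) (Pow A)" using insert by (auto simp: inj_on_def)
  have c: "T \<in> Pow A \<Longrightarrow> card (insert a T) = Suc (card T)" for T
    using insert by (subst card_insert_disjoint) (auto intro: finite_subset)
  have "(\<Sum>T\<in>Pow (insert a A). c ^ card T) = (\<Sum>T\<in>Pow A. c ^ card T) + (\<Sum>T\<in>insert a ` Pow A. c ^ card T)"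
    unfolding Pow_insert by (rule sum.union_disjoint[OF fin dis])
  also have "(\<Sum>T\<in>insert a ` Pow A. c ^ card T) = (\<Sum>T\<in>Pow A. c * c ^ card T)"
    by (simp add: sum.reindex[OF inj] c)
  also have "\<dots> = c * (1 + c) ^ card A" by (simp add: sum_distrib_left[symmetric] insert.IH)
  finally show ?case using insert by (simp add: algebra_simps)
qed

definition Pall :: "'a set \<Rightarrow> 'a set \<Rightarrow> ('a set \<times> 'a set) set" where
  "Pall X Y = {AB. fst AB \<subseteq> X \<and> snd AB \<subseteq> Y \<and> fst AB \<inter> snd AB = {}}"

lemma Pall_Sigma1: "Pall X Y = Sigma (Pow X) (\<lambda>A. Pow (Y - A))"
  by (auto simp: Pall_def)

lemma Pall_sum1:
  assumes "finite X" "finite Y"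
  shows "(\<Sum>AB\<in>Pall X Y. (-1::int) ^ (card (fst AB) + card (snd AB))) =
         (\<Sum>A\<in>Pow X. (-1) ^ card A * 0 ^ card (Y - A))"
proof -
  have "(\<Sum>AB\<in>Pall X Y. (-1::int) ^ (card (fst AB) + card (snd AB))) =
        (\<Sum>A\<in>Pow X. \<Sum>B\<in>Pow (Y - A). (-1) ^ (card A + card B))"
    unfolding Pall_Sigma1 using assms by (subst sum.Sigma) (auto simp: split_beta)
  also have "\<dots> = (\<Sum>A\<in>Pow X. (-1) ^ card A * (\<Sum>B\<in>Pow (Y - A). (-1) ^ card B))"
    by (simp add: power_add sum_distrib_left)
  also have "\<dots> = (\<Sum>A\<in>Pow X. (-1) ^ card A * 0 ^ card (Y - A))"
    using assms by (intro sum.cong refl) (simp add: sum_pow_card_Pow)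
  finally show ?thesis .
qed

lemma Pall_swap: "Pall X Y = (\<lambda>BA. (snd BA, fst BA)) ` Pall Y X"
  by (auto simp: Pall_def image_iff)

lemma Pall_sum2:
  assumes "finite X" "finite Y"
  shows "(\<Sum>AB\<in>Pall X Y. (-1::int) ^ (card (fst AB) + card (snd AB))) =
         (\<Sum>B\<in>Pow Y. (-1) ^ card B * 0 ^ card (X - B))"
proof -
  have inj: "inj_on (\<lambda>BA. (snd BA, fst BA)) (Pall Y X)" by (auto simp: inj_on_def)
  have "(\<Sum>AB\<in>Pall X Y. (-1::int) ^ (card (fst AB) + card (snd AB))) =
        (\<Sum>BA\<in>Pall Y X. (-1::int) ^ (card (fst BA) + card (snd BA)))"
    unfolding Pall_swap[of X Y] by (simp add: sum.reindex[OF inj] add.commute)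
  also have "\<dots> = (\<Sum>B\<in>Pow Y. (-1) ^ card B * 0 ^ card (X - B))"
    using Pall_sum1[OF assms(2,1)] .
  finally show ?thesis .
qed

lemma Pall_zero1:
  assumes "finite X" "finite Y" "x \<in> X" "x \<notin> Y"
  shows "(\<Sum>AB\<in>Pall X Y. (-1::int) ^ (card (fst AB) + card (snd AB))) = 0"
proof -
  have "card (X - B) \<noteq> 0" if "B \<subseteq> Y" for B
    using assms that by auto
  then show ?thesis unfolding Pall_sum2[OF assms(1,2)] by (intro sum.neutral) auto
qed

lemma Pall_zero2:
  assumes "finite X" "finite Y" "x \<in> Y" "x \<notin> X"
  shows "(\<Sum>AB\<in>Pall X Y. (-1::int) ^ (card (fst AB) + card (snd AB))) = 0"
proof -
  have "card (Y - A) \<noteq> 0" if "A \<subseteq> X" for A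
    using assms that by auto
  then show ?thesis unfolding Pall_sum1[OF assms(1,2)] by (intro sum.neutral) auto
qed

lemma Pall_diag:
  assumes "finite V"
  shows "(\<Sum>AB\<in>Pall V V. (-1::int) ^ (card (fst AB) + card (snd AB))) = (-1) ^ card V"
proof -
  have "(\<Sum>A\<in>Pow V. (-1::int) ^ card A * 0 ^ card (V - A)) = (\<Sum>A\<in>Pow V. if A = V then (-1) ^ card A else 0)"
  proof (intro sum.cong refl)
    fix A assume "A \<in> Pow V"
    then have "card (V - A) = 0 \<longleftrightarrow> A = V" using assms by (auto dest: finite_subset)
    then show "(-1::int) ^ card A * 0 ^ card (V - A) = (if A = V then (-1) ^ card A else 0)"
      by (auto simp: power_0_left)
  qed
  also have "\<dots> = (-1) ^ card V" using assms by (simp add: sum.delta')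
  finally show ?thesis unfolding Pall_sum1[OF assms assms] .
qed

lemma cw_detour:
  assumes cw: "closed_walk P ws es" and j: "j < length es" and e: "e \<in> sedges P"
    and ends: "sends P e = (ws ! j, w') \<or> sends P e = (w', ws ! j)"
  shows "closed_walk P (take (Suc j) ws @ w' # drop j ws) (take j es @ e # e # drop j es)"
proof -
  let ?ws = "take (Suc j) ws @ w' # drop j ws" and ?es = "take j es @ e # e # drop j es"
  have ne: "es \<noteq> []" and len: "length ws = length es + 1" and hl: "hd ws = last ws"
    and ed: "\<And>i. i < length es \<Longrightarrow> es ! i \<in> sedges P \<and>
        (sends P (es ! i) = (ws ! i, ws ! (i + 1)) \<or> sends P (es ! i) = (ws ! (i + 1), ws ! i))"
    using cw by (auto simp: closed_walk_def)
  have jw: "j < length ws" using j len by simp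
  have lws: "length ?ws = length ws + 2" using jw by simp
  have les: "length ?es = length es + 2" using j by simp
  have wsn: "?ws ! i = (if i \<le> j then ws ! i else if i = Suc j then w' else ws ! (i - 2))"
    if "i < length ?ws" for i
  proof -
    consider "i \<le> j" | "i = Suc j" | "i \<ge> Suc (Suc j)" by linarith
    then show ?thesis
    proof cases
      case 1 then show ?thesis using jw by (simp add: nth_append)
    next
      case 2 then show ?thesis using jw by (simp add: nth_append)
    next
      case 3
      then have "i - Suc j = Suc (i - Suc (Suc j))" by simp
      then show ?thesis using jw 3 that by (simp add: nth_append)
    qed
  qed
  have esn: "?es ! i = (if i < j then es ! i else if i = j \<or> i = Suc j then e else es ! (i - 2))"
    if "i < length ?es" for i
  proof -
    consider "i < j" | "i = j" | "i = Suc j" | "i \<ge> Suc (Suc j)" by linarith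
    then show ?thesis
    proof cases
      case 1 then show ?thesis using j by (simp add: nth_append)
    next
      case 2 then show ?thesis using j by (simp add: nth_append)
    next
      case 3 then show ?thesis using j by (simp add: nth_append)
    next
      case 4
      then have "i - j = Suc (Suc (i - Suc (Suc j)))" by simp
      then show ?thesis using j 4 that by (simp add: nth_append)
    qed
  qed
  have hd: "hd ?ws = hd ws" using jw by (cases ws) auto
  have lst: "last ?ws = last ws" using jw by simp
  have edges: "?es ! i \<in> sedges P \<and>
        (sends P (?es ! i) = (?ws ! i, ?ws ! (i + 1)) \<or> sends P (?es ! i) = (?ws ! (i + 1), ?ws ! i))"
    if i: "i < length ?es" for i
  proof -
    have i1: "i < length ?ws" "i + 1 < length ?ws" using i les lws len by auto
    consider "i < j" | "i = j" | "i = Suc j" | "i \<ge> Suc (Suc j)" by linarith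
    then show ?thesis
    proof cases
      case 1 then show ?thesis using ed[of i] j wsn[OF i1(1)] wsn[OF i1(2)] esn[OF i] by auto
    next
      case 2 then show ?thesis using e ends wsn[OF i1(1)] wsn[OF i1(2)] esn[OF i] by auto
    next
      case 3 then show ?thesis using e ends wsn[OF i1(1)] wsn[OF i1(2)] esn[OF i] by auto
    next
      case 4
      then have "i - 2 < length es" "i - 2 + 1 = i + 1 - 2" using i les by auto
      then show ?thesis using 4 ed[of "i - 2"] wsn[OF i1(1)] wsn[OF i1(2)] esn[OF i] by auto
    qed
  qed
  show ?thesis unfolding closed_walk_def
    using lws les len hd lst hl edges by auto
qed

lemma cw_endpoints:
  assumes cw: "closed_walk P ws es" and w: "w \<in> set ws"
  shows "\<exists>j<length es. ws ! j = w"
proof -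
  have ne: "es \<noteq> []" and len: "length ws = length es + 1" and hl: "hd ws = last ws"
    using cw by (auto simp: closed_walk_def)
  obtain i where i: "i < length ws" "ws ! i = w" using w by (auto simp: in_set_conv_nth)
  show ?thesis
  proof (cases "i < length es")
    case True then show ?thesis using i by auto
  next
    case False
    then have "i = length ws - 1" using i len by simp
    have wsne: "ws \<noteq> []" using len by auto
    then have "w = last ws" using i \<open>i = length ws - 1\<close> by (simp add: last_conv_nth)
    also have "\<dots> = ws ! 0" using hl wsne by (simp add: hd_conv_nth)
    finally show ?thesis using ne by (intro exI[of _ 0]) auto
  qed
qed

lemma cw_edges_sub: "closed_walk P ws es \<Longrightarrow> set es \<subseteq> sedges P"
  by (auto simp: closed_walk_def in_set_conv_nth)

lemma cw_vertex_edge: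
  assumes cw: "closed_walk P ws es" and w: "w \<in> set ws"
  shows "\<exists>e\<in>set es. fst (sends P e) = w \<or> snd (sends P e) = w"
proof -
  obtain j where j: "j < length es" "ws ! j = w" using cw_endpoints[OF cw w] by blast
  then have "sends P (es ! j) = (ws ! j, ws ! (j + 1)) \<or> sends P (es ! j) = (ws ! (j + 1), ws ! j)"
    using cw by (auto simp: closed_walk_def)
  then show ?thesis using j by (intro bexI[of _ "es ! j"]) auto
qed

lemma sink_source_differ:
  assumes sp: "signed_poset P" and ne: "sedges P \<noteq> {}"
  shows "\<exists>x. is_sink P x \<noteq> is_source P x"
proof (rule ccontr)
  assume "\<not> ?thesis"
  then have H: "\<And>x. is_sink P x = is_source P x" by auto
  have or: "is_oriented_signed_graph P" and acyc: "\<And>ws es. \<not> is_cycle P ws es"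
    using sp by (auto simp: signed_poset_def)
  have finE: "finite (sedges P)" using or by (simp add: is_oriented_signed_graph_def)
  have F: "has_in_arrow P (sedges P) w \<and> has_out_arrow P (sedges P) w"
    if e: "e \<in> sedges P" and ew: "fst (sends P e) = w \<or> snd (sends P e) = w" for e w
  proof -
    have wV: "w \<in> sverts P" using or e ew by (auto simp: is_oriented_signed_graph_def)
    have d: "has_in_arrow P (sedges P) w \<or> has_out_arrow P (sedges P) w"
      using e ew unfolding has_in_arrow_def has_out_arrow_def by (cases "fst (sarr P e)"; cases "snd (sarr P e)") blast+
    have i: "has_in_arrow P (sedges P) w \<longleftrightarrow> \<not> is_source P w"
      using wV unfolding has_in_arrow_def is_source_def by blast
    have o: "has_out_arrow P (sedges P) w \<longleftrightarrow> \<not> is_sink P w"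
      using wV unfolding has_out_arrow_def is_sink_def by blast
    show ?thesis using d i o H[of w] by blast
  qed
  obtain e0 where e0: "e0 \<in> sedges P" using ne by blast
  let ?u = "fst (sends P e0)" and ?v = "snd (sends P e0)"
  have cw0: "closed_walk P [?u, ?v, ?u] [e0, e0]"
    unfolding closed_walk_def using e0 by (auto simp: less_Suc_eq)
  have bnd: "\<forall>y. closed_walk P (fst y) (snd y) \<longrightarrow> card (set (snd y)) < card (sedges P) + 1"
    using cw_edges_sub card_mono[OF finE] by (metis less_Suc_eq_le Suc_eq_plus1)
  obtain m where m: "closed_walk P (fst m) (snd m)"
    and mx: "\<And>y. closed_walk P (fst y) (snd y) \<Longrightarrow> card (set (snd y)) \<le> card (set (snd m))"
    using Lattices_Big.ex_has_greatest_nat[of "\<lambda>y. closed_walk P (fst y) (snd y)" "([?u, ?v, ?u], [e0, e0])"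
        "\<lambda>y. card (set (snd y))" "card (sedges P) + 1"] cw0 bnd by auto
  define ws where "ws = fst m"
  define es where "es = snd m"
  have cw: "closed_walk P ws es" using m by (simp add: ws_def es_def)
  have mx': "\<And>ws' es'. closed_walk P ws' es' \<Longrightarrow> card (set es') \<le> card (set es)"
    using mx unfolding es_def by (metis fst_conv snd_conv)
  have closed: "e \<in> set es" if e: "e \<in> sedges P" and w: "w \<in> set ws"
    and ew: "fst (sends P e) = w \<or> snd (sends P e) = w" for e w
  proof (rule ccontr)
    assume en: "e \<notin> set es"
    obtain j where j: "j < length es" "ws ! j = w" using cw_endpoints[OF cw w] by blast
    obtain w' where ends: "sends P e = (ws ! j, w') \<or> sends P e = (w', ws ! j)"
      using ew j(2) by (metis prod.collapse)
    have cw': "closed_walk P (take (Suc j) ws @ w' # drop j ws) (take j es @ e # e # drop j es)"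
      by (rule cw_detour[OF cw j(1) e ends])
    have "set (take j es @ e # e # drop j es) = insert e (set es)"
      by (metis append_take_drop_id insert_absorb2 list.simps(15) set_append Un_insert_right)
    moreover have "card (insert e (set es)) = Suc (card (set es))" using en by simp
    ultimately show False using mx'[OF cw'] by simp
  qed
  have "is_cycle P ws es"
    unfolding is_cycle_def
  proof (intro conjI cw ballI)
    fix w assume w: "w \<in> set ws"
    obtain e where e: "e \<in> set es" "fst (sends P e) = w \<or> snd (sends P e) = w"
      using cw_vertex_edge[OF cw w] by blast
    have eE: "e \<in> sedges P" using e(1) cw_edges_sub[OF cw] by blast
    have io: "has_in_arrow P (sedges P) w" "has_out_arrow P (sedges P) w" using F[OF eE e(2)] by auto
    show "has_in_arrow P (set es) w"
    proof -
      obtain e' where e': "e' \<in> sedges P" "(fst (sends P e') = w \<and> fst (sarr P e')) \<or> (snd (sends P e') = w \<and> snd (sarr P e'))"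
        using io(1) by (auto simp: has_in_arrow_def)
      have "e' \<in> set es" using closed[OF e'(1) w] e'(2) by blast
      then show ?thesis using e'(2) by (auto simp: has_in_arrow_def)
    qed
    show "has_out_arrow P (set es) w"
    proof -
      obtain e' where e': "e' \<in> sedges P" "(fst (sends P e') = w \<and> \<not> fst (sarr P e')) \<or> (snd (sends P e') = w \<and> \<not> snd (sarr P e'))"
        using io(2) by (auto simp: has_out_arrow_def)
      have "e' \<in> set es" using closed[OF e'(1) w] e'(2) by blast
      then show ?thesis using e'(2) by (auto simp: has_out_arrow_def)
    qed
  qed
  then show False using acyc by blast
qed

definition psiN :: "nat \<Rightarrow> sposet \<Rightarrow> int" where
  "psiN N P = (\<Sum>K<N. (-1) ^ (K + card (sverts P)) * int (card (CK K P)))"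

lemma CK_empty_big:
  assumes fin: "finite (sverts P)" and K: "card (sverts P) < K"
  shows "CK K P = {}"
proof (rule ccontr)
  assume "CK K P \<noteq> {}"
  then obtain k where k: "k \<in> CK K P" by blast
  then have "{1..int K} \<subseteq> abs ` k ` sverts P" by (auto simp: CK_def levels_def)
  then have "card {1..int K} \<le> card (abs ` k ` sverts P)" using fin by (intro card_mono) auto
  also have "\<dots> \<le> card (sverts P)" using fin by (metis card_image_le finite_imageI image_comp)
  finally show False using K by simp
qed

lemma psiN_indep:
  assumes fin: "finite (sverts P)" and N: "card (sverts P) < N"
  shows "psiN N P = psiN (Suc (card (sverts P))) P"
  unfolding psiN_def
  by (rule sum.mono_neutral_right) (use N CK_empty_big[OF fin] in auto)

lemma CK_zero:
  assumes or: "is_oriented_signed_graph P"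
  shows "card (CK 0 P) = (if sedges P = {} then 1 else 0)"
proof -
  let ?z = "restrict (\<lambda>_. 0::int) (sverts P)"
  have lv: "levels P k = {} \<longleftrightarrow> (\<forall>v\<in>sverts P. k v = 0)" for k
    by (auto simp: levels_def image_subset_iff)
  have eq: "k \<in> sverts P \<rightarrow>\<^sub>E UNIV \<and> (\<forall>v\<in>sverts P. k v = 0) \<longleftrightarrow> k = ?z" for k
    by (auto simp: PiE_def extensional_def fun_eq_iff)
  have "CK 0 P = {k. k = ?z \<and> good P k}"
    unfolding CK_def using lv eq by auto
  also have "\<dots> = (if sedges P = {} then {?z} else {})"
  proof (cases "sedges P = {}")
    case True
    then show ?thesis by (auto simp: good_def proper_col_def preserves_def)
  next
    case False
    then obtain e where e: "e \<in> sedges P" by blast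
    have "fst (sends P e) \<in> sverts P" "snd (sends P e) \<in> sverts P"
      using or e by (auto simp: is_oriented_signed_graph_def)
    then have "\<not> good P ?z" using e by (auto simp: good_def proper_col_def)
    then show ?thesis using False by auto
  qed
  finally show ?thesis by simp
qed

lemma rest_signed:
  assumes sp: "signed_poset P"
  shows "signed_poset (rest P S)"
proof -
  have or: "is_oriented_signed_graph P" and acyc: "\<And>ws es. \<not> is_cycle P ws es"
    using sp by (auto simp: signed_poset_def)
  have or': "is_oriented_signed_graph (rest P S)"
    using or by (auto simp: is_oriented_signed_graph_def)
  have "\<not> is_cycle (rest P S) ws es" for ws es
  proof
    assume c: "is_cycle (rest P S) ws es"
    have "closed_walk P ws es" using c by (auto simp: is_cycle_def closed_walk_def)
    moreover have "has_in_arrow (rest P S) X w = has_in_arrow P X w" for X w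
      by (simp add: has_in_arrow_def)
    moreover have "has_out_arrow (rest P S) X w = has_out_arrow P X w" for X w
      by (simp add: has_out_arrow_def)
    ultimately have "is_cycle P ws es" using c by (simp add: is_cycle_def)
    then show False using acyc by blast
  qed
  then show ?thesis using or' by (simp add: signed_poset_def)
qed

lemma pairs_Pall: "pairs P = Pall (Collect (is_sink P)) (Collect (is_source P)) - {({}, {})}"
  by (auto simp: pairs_def Pall_def)

lemma pairs_sum:
  assumes sp: "signed_poset P"
  shows "(\<Sum>AB\<in>pairs P. (-1::int) ^ (card (fst AB) + card (snd AB))) =
         (if sedges P = {} then (-1) ^ card (sverts P) else 0) - 1"
proof -
  have or: "is_oriented_signed_graph P" using sp by (simp add: signed_poset_def)
  have fin: "finite (sverts P)" using or by (simp add: is_oriented_signed_graph_def)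
  let ?X = "Collect (is_sink P)" and ?Y = "Collect (is_source P)"
  have fX: "finite ?X" and fY: "finite ?Y"
    using fin sinks_sub[of P] sources_sub[of P] by (auto intro: finite_subset)
  have finP: "finite (Pall ?X ?Y)" unfolding Pall_Sigma1 using fX fY by auto
  have mem: "({}, {}) \<in> Pall ?X ?Y" by (simp add: Pall_def)
  have "(\<Sum>AB\<in>Pall ?X ?Y. (-1::int) ^ (card (fst AB) + card (snd AB))) =
        1 + (\<Sum>AB\<in>pairs P. (-1::int) ^ (card (fst AB) + card (snd AB)))"
    unfolding pairs_Pall using sum.remove[OF finP mem, of "\<lambda>AB. (-1::int) ^ (card (fst AB) + card (snd AB))"] by simp
  moreover have "(\<Sum>AB\<in>Pall ?X ?Y. (-1::int) ^ (card (fst AB) + card (snd AB))) =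
      (if sedges P = {} then (-1) ^ card (sverts P) else 0)"
  proof (cases "sedges P = {}")
    case True
    then have "?X = sverts P" "?Y = sverts P" by (auto simp: is_sink_def is_source_def)
    then show ?thesis using True Pall_diag[OF fin] by simp
  next
    case False
    then obtain x where x: "is_sink P x \<noteq> is_source P x" using sink_source_differ[OF sp] by blast
    show ?thesis
    proof (cases "is_sink P x")
      case True
      then show ?thesis using False x Pall_zero1[OF fX fY, of x] by simp
    next
      case f: False
      then show ?thesis using False x Pall_zero2[OF fX fY, of x] by simp
    qed
  qed
  ultimately show ?thesis by simp
qed

lemma pairs_props:
  assumes "AB \<in> pairs P" "finite (sverts P)"
  shows "fst AB \<subseteq> sverts P" "snd AB \<subseteq> sverts P" "fst AB \<inter> snd AB = {}" "fst AB \<union> snd AB \<noteq> {}"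
    "card (sverts P) = card (sverts P - (fst AB \<union> snd AB)) + card (fst AB) + card (snd AB)"
    "card (sverts P - (fst AB \<union> snd AB)) < card (sverts P)"
proof -
  have A0: "fst AB \<subseteq> {v. is_sink P v}" and B0: "snd AB \<subseteq> {v. is_source P v}"
    and d: "fst AB \<inter> snd AB = {}" and ne: "fst AB \<union> snd AB \<noteq> {}"
    using assms(1) by (auto simp: pairs_def)
  show A: "fst AB \<subseteq> sverts P" using A0 sinks_sub[of P] by blast
  show B: "snd AB \<subseteq> sverts P" using B0 sources_sub[of P] by blast
  show "fst AB \<inter> snd AB = {}" "fst AB \<union> snd AB \<noteq> {}" using d ne by auto
  have fA: "finite (fst AB)" "finite (snd AB)" using A B assms(2) by (auto intro: finite_subset)
  have S: "fst AB \<union> snd AB \<subseteq> sverts P" using A B by auto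
  have c1: "card (sverts P) = card (sverts P - (fst AB \<union> snd AB)) + card (fst AB \<union> snd AB)"
    using card_Diff_subset[OF _ S] card_mono[OF assms(2) S] fA by simp
  moreover have "card (fst AB \<union> snd AB) = card (fst AB) + card (snd AB)"
    using card_Un_disjoint[OF fA d] .
  ultimately show "card (sverts P) = card (sverts P - (fst AB \<union> snd AB)) + card (fst AB) + card (snd AB)"
    by simp
  have "card (fst AB \<union> snd AB) > 0" using ne fA by auto
  then show "card (sverts P - (fst AB \<union> snd AB)) < card (sverts P)" using c1 by simp
qed

lemma psi_one:
  assumes "signed_poset P" "card (sverts P) < N"
  shows "psiN N P = 1"
  using assms
proof (induction "card (sverts P)" arbitrary: P N rule: less_induct)
  case less
  note sp = less.prems(1)
  have or: "is_oriented_signed_graph P" using sp by (simp add: signed_poset_def)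
  have fin: "finite (sverts P)" using or by (simp add: is_oriented_signed_graph_def)
  let ?n = "card (sverts P)"
  obtain M where N: "N = Suc M" using less.prems(2) by (cases N) auto
  have M: "?n \<le> M" using less.prems(2) N by simp
  have IH: "psiN M (rest P (fst AB \<union> snd AB)) = 1" if AB: "AB \<in> pairs P" for AB
  proof -
    note pp = pairs_props[OF AB fin]
    show ?thesis
      using less.hyps[of "rest P (fst AB \<union> snd AB)" M] pp(6) M rest_signed[OF sp] by simp
  qed
  have cardS: "int (card (CK (Suc K) P)) = (\<Sum>AB\<in>pairs P. int (card (CK K (rest P (fst AB \<union> snd AB)))))" for K
    using sum_CK_Suc[OF or, of "\<lambda>_. (1::int)" K] by simp
  have "psiN N P = (-1) ^ ?n * int (card (CK 0 P)) +
      (\<Sum>K<M. (-1) ^ (Suc K + ?n) * int (card (CK (Suc K) P)))"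
    unfolding psiN_def N by (subst sum.lessThan_Suc_shift) simp
  also have "(\<Sum>K<M. (-1) ^ (Suc K + ?n) * int (card (CK (Suc K) P))) =
      (\<Sum>AB\<in>pairs P. \<Sum>K<M. (-1) ^ (Suc K + ?n) * int (card (CK K (rest P (fst AB \<union> snd AB)))))"
    unfolding cardS sum_distrib_left by (rule sum.swap)
  also have "\<dots> = (\<Sum>AB\<in>pairs P. - ((-1) ^ (card (fst AB) + card (snd AB)) * psiN M (rest P (fst AB \<union> snd AB))))"
  proof (intro sum.cong refl)
    fix AB assume AB: "AB \<in> pairs P"
    note pp = pairs_props[OF AB fin]
    have sg: "(-1::int) ^ (Suc K + ?n) = - ((-1) ^ (card (fst AB) + card (snd AB)) *
        (-1) ^ (K + card (sverts P - (fst AB \<union> snd AB))))" for K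
    proof -
      have "Suc K + ?n = 1 + (card (fst AB) + card (snd AB)) + (K + card (sverts P - (fst AB \<union> snd AB)))"
        using pp(5) by simp
      then show ?thesis by (simp only: power_add) simp
    qed
    show "(\<Sum>K<M. (-1) ^ (Suc K + ?n) * int (card (CK K (rest P (fst AB \<union> snd AB))))) =
      - ((-1) ^ (card (fst AB) + card (snd AB)) * psiN M (rest P (fst AB \<union> snd AB)))"
      unfolding psiN_def sg by (simp add: sum_distrib_left sum_negf mult.assoc)
  qed
  also have "\<dots> = - (\<Sum>AB\<in>pairs P. (-1::int) ^ (card (fst AB) + card (snd AB)))"
    using IH by (simp add: sum_negf)
  finally show ?case
    using pairs_sum[OF sp] CK_zero[OF or] by simp
qed

definition topA :: "nat \<Rightarrow> sposet \<Rightarrow> (nat \<Rightarrow> int) \<Rightarrow> nat set" where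
  "topA K P k = {v \<in> sverts P. k v = int K + 1}"
definition botB :: "nat \<Rightarrow> sposet \<Rightarrow> (nat \<Rightarrow> int) \<Rightarrow> nat set" where
  "botB K P k = {v \<in> sverts P. k v = - (int K + 1)}"

definition tw :: "nat \<Rightarrow> nat \<Rightarrow> nat \<Rightarrow> rat poly" where
  "tw K n a = (-1) ^ (K + n + a) * [:-1, 1:] ^ a"

definition TN :: "nat \<Rightarrow> sposet \<Rightarrow> rat poly" where
  "TN N P = (\<Sum>K<N. \<Sum>k\<in>CK (Suc K) P.
      if botB K P k = {} then tw K (card (sverts P)) (card (topA K P k)) else 0)"

lemma one_plus_tm1: "1 + [:-1, 1:] = ([:0, 1:] :: rat poly)"
  by (simp add: one_pCons)

lemma T_val:
  assumes sp: "signed_poset P" and N: "card (sverts P) \<le> N"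
  shows "TN N P = [:0, 1:] ^ card {v. is_sink P v} - 1"
proof -
  have or: "is_oriented_signed_graph P" using sp by (simp add: signed_poset_def)
  have fin: "finite (sverts P)" using or by (simp add: is_oriented_signed_graph_def)
  let ?n = "card (sverts P)"
  let ?R = "\<lambda>AB. rest P (fst AB \<union> snd AB)"
  let ?X = "Collect (is_sink P)"
  have fX: "finite ?X" using fin sinks_sub[of P] by (auto intro: finite_subset)
  have inner: "(\<Sum>k\<in>CK (Suc K) P. if botB K P k = {} then tw K ?n (card (topA K P k)) else 0) =
      (\<Sum>AB\<in>pairs P. if snd AB = {} then of_nat (card (CK K (?R AB))) * tw K ?n (card (fst AB)) else 0)" for K
  proof -
    have "(\<Sum>k\<in>CK (Suc K) P. if botB K P k = {} then tw K ?n (card (topA K P k)) else 0) =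
      (\<Sum>AB\<in>pairs P. \<Sum>k\<in>CK K (?R AB). if botB K P (extc (fst AB) (snd AB) (int K + 1) k) = {}
          then tw K ?n (card (topA K P (extc (fst AB) (snd AB) (int K + 1) k))) else 0)"
      by (rule sum_CK_Suc[OF or])
    also have "\<dots> = (\<Sum>AB\<in>pairs P. \<Sum>k\<in>CK K (?R AB). if snd AB = {} then tw K ?n (card (fst AB)) else 0)"
    proof (intro sum.cong refl)
      fix AB k assume AB: "AB \<in> pairs P" and k: "k \<in> CK K (?R AB)"
      have AB': "(fst AB, snd AB) \<in> pairs P" using AB by simp
      note r = extc_recover[OF AB' k]
      show "(if botB K P (extc (fst AB) (snd AB) (int K + 1) k) = {}
          then tw K ?n (card (topA K P (extc (fst AB) (snd AB) (int K + 1) k))) else 0) =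
          (if snd AB = {} then tw K ?n (card (fst AB)) else 0)"
        unfolding topA_def botB_def r by simp
    qed
    also have "\<dots> = (\<Sum>AB\<in>pairs P. if snd AB = {} then of_nat (card (CK K (?R AB))) * tw K ?n (card (fst AB)) else 0)"
      by (intro sum.cong refl) simp
    finally show ?thesis .
  qed
  have "TN N P = (\<Sum>K<N. \<Sum>AB\<in>pairs P. if snd AB = {} then of_nat (card (CK K (?R AB))) * tw K ?n (card (fst AB)) else 0)"
    unfolding TN_def inner ..
  also have "\<dots> = (\<Sum>AB\<in>pairs P. \<Sum>K<N. if snd AB = {} then of_nat (card (CK K (?R AB))) * tw K ?n (card (fst AB)) else 0)"
    by (rule sum.swap)
  also have "\<dots> = (\<Sum>AB\<in>pairs P. if snd AB = {} then [:-1, 1:] ^ card (fst AB) else 0)"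
  proof (intro sum.cong refl)
    fix AB assume AB: "AB \<in> pairs P"
    note pp = pairs_props[OF AB fin]
    show "(\<Sum>K<N. if snd AB = {} then of_nat (card (CK K (?R AB))) * tw K ?n (card (fst AB)) else 0) =
        (if snd AB = {} then [:-1, 1:] ^ card (fst AB) else 0)"
    proof (cases "snd AB = {}")
      case True
      let ?m = "card (sverts P - (fst AB \<union> snd AB))"
      have nm: "?n = ?m + card (fst AB)" using pp(5) True by simp
      have tw: "tw K ?n (card (fst AB)) = of_int ((-1) ^ (K + ?m)) * [:-1, 1:] ^ card (fst AB)" for K
      proof -
        have "K + ?n + card (fst AB) = (K + ?m) + 2 * card (fst AB)" using nm by simp
        then show ?thesis unfolding tw_def by (simp only: power_add power_mult) simp
      qed
      have psi: "psiN N (?R AB) = 1"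
        using psi_one[OF rest_signed[OF sp]] pp(6) N by simp
      have "(\<Sum>K<N. of_nat (card (CK K (?R AB))) * tw K ?n (card (fst AB))) =
          of_int (psiN N (?R AB)) * [:-1, 1:] ^ card (fst AB)"
        unfolding tw psiN_def by (simp add: sum_distrib_right sum_distrib_left mult_ac)
      then show ?thesis using True psi by simp
    qed simp
  qed
  also have "\<dots> = (\<Sum>A\<in>Pow ?X - {{}}. [:-1, 1:] ^ card A)"
  proof -
    have "(\<Sum>AB\<in>pairs P. if snd AB = {} then [:-1, 1:] ^ card (fst AB) else 0) =
        (\<Sum>AB\<in>pairs P \<inter> {AB. snd AB = {}}. ([:-1, 1:] :: rat poly) ^ card (fst AB))"
      by (simp add: sum.inter_filter[OF pairs_finite[OF fin]] Int_def)
    also have "pairs P \<inter> {AB. snd AB = {}} = (\<lambda>A. (A, {})) ` (Pow ?X - {{}})"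
      by (auto simp: pairs_def image_iff)
    also have "(\<Sum>AB\<in>(\<lambda>A. (A, {})) ` (Pow ?X - {{}}). ([:-1, 1:] :: rat poly) ^ card (fst AB)) =
        (\<Sum>A\<in>Pow ?X - {{}}. [:-1, 1:] ^ card A)"
      by (subst sum.reindex) (auto simp: inj_on_def)
    finally show ?thesis .
  qed
  also have "\<dots> = (\<Sum>A\<in>Pow ?X. ([:-1, 1:] :: rat poly) ^ card A) - 1"
    using sum.remove[of "Pow ?X" "{}" "\<lambda>A. ([:-1, 1:] :: rat poly) ^ card A"] fX by simp
  also have "\<dots> = [:0, 1:] ^ card ?X - 1"
    using sum_pow_card_Pow[OF fX, of "[:-1, 1:] :: rat poly"] one_plus_tm1 by simp
  finally show ?thesis .
qed

definition topK :: "int multiset \<Rightarrow> int" where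
  "topK m = Max (insert 0 (abs ` set_mset m))"

definition cmpr :: "int multiset \<Rightarrow> bool" where
  "cmpr m \<longleftrightarrow> abs ` set_mset m - {0} = {1..topK m}"

definition wt :: "int multiset \<Rightarrow> rat poly" where
  "wt m = (if cmpr m then (-1) ^ (size m + nat (topK m)) +
      (if topK m \<ge> 1 \<and> count m (- topK m) = 0 then tw (nat (topK m) - 1) (size m) (count m (topK m)) else 0)
     else 0)"

definition MS :: "nat \<Rightarrow> int multiset set" where
  "MS D = {m. size m \<le> D \<and> set_mset m \<subseteq> {- int D..int D}}"

definition PhiD :: "nat \<Rightarrow> (int multiset \<Rightarrow> rat) \<Rightarrow> rat poly" where
  "PhiD D f = (\<Sum>m\<in>MS D. smult (f m) (wt m))"

lemma MS_finite: "finite (MS D)"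
proof -
  have "MS D = (\<Union>s\<in>{..D}. multisets_of_size {- int D..int D} s)"
    by (auto simp: MS_def multisets_of_size_def)
  then show ?thesis by auto
qed

definition imk :: "sposet \<Rightarrow> (nat \<Rightarrow> int) \<Rightarrow> int multiset" where
  "imk P k = image_mset k (mset_set (sverts P))"

lemma count_imk:
  assumes "finite (sverts P)"
  shows "count (imk P k) x = card {v \<in> sverts P. k v = x}"
proof -
  have "count (imk P k) x = (\<Sum>v | v \<in># mset_set (sverts P) \<and> x = k v. count (mset_set (sverts P)) v)"
    unfolding imk_def by (rule count_image_mset')
  also have "\<dots> = (\<Sum>v \<in> {v \<in> sverts P. k v = x}. 1)"
    using assms by (intro sum.cong) auto
  finally show ?thesis by simp
qed

lemma set_imk: "finite (sverts P) \<Longrightarrow> set_mset (imk P k) = k ` sverts P"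
  by (simp add: imk_def)

lemma size_imk: "size (imk P k) = card (sverts P)"
  by (simp add: imk_def)

lemma CK_topK:
  assumes fin: "finite (sverts P)" and k: "k \<in> CK K P"
  shows "topK (imk P k) = int K" "cmpr (imk P k)"
proof -
  have lv: "abs ` k ` sverts P - {0} = {1..int K}" using k by (simp add: CK_def levels_def)
  have b: "\<And>v. v \<in> sverts P \<Longrightarrow> \<bar>k v\<bar> \<le> int K" using CK_bound[OF k] .
  have "Max (insert 0 (abs ` k ` sverts P)) = int K"
  proof (rule Max_eqI)
    show "finite (insert 0 (abs ` k ` sverts P))" using fin by simp
    show "y \<le> int K" if "y \<in> insert 0 (abs ` k ` sverts P)" for y using that b by auto
    show "int K \<in> insert 0 (abs ` k ` sverts P)"
    proof (cases "K = 0")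
      case False
      then have "int K \<in> {1..int K}" by simp
      then show ?thesis using lv by blast
    qed simp
  qed
  then show t: "topK (imk P k) = int K" using fin by (simp add: topK_def set_imk image_image)
  show "cmpr (imk P k)" unfolding cmpr_def t using lv fin by (simp add: set_imk image_image)
qed

lemma wt_CK:
  assumes fin: "finite (sverts P)" and k: "k \<in> CK K P"
  shows "wt (imk P k) = (-1) ^ (card (sverts P) + K) +
     (if K \<ge> 1 \<and> botB (K - 1) P k = {} then tw (K - 1) (card (sverts P)) (card (topA (K - 1) P k)) else 0)"
proof -
  note t = CK_topK[OF fin k]
  have c1: "count (imk P k) (- int K) = card (botB (K - 1) P k)" if "K \<ge> 1"
    using that unfolding count_imk[OF fin] botB_def by (simp add: of_nat_diff)
  have c2: "count (imk P k) (int K) = card (topA (K - 1) P k)" if "K \<ge> 1"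
    using that unfolding count_imk[OF fin] topA_def by (simp add: of_nat_diff)
  have fb: "finite (botB (K - 1) P k)" using fin by (simp add: botB_def)
  show ?thesis
    unfolding wt_def t size_imk using t(2) c1 c2 fb by auto
qed

lemma Phi_sum_k:
  assumes or: "is_oriented_signed_graph P" and D: "card (sverts P) \<le> D"
  shows "PhiD D (Ycoeff P) = (\<Sum>k\<in>{k \<in> PiE (sverts P) (\<lambda>_. {- int D..int D}). good P k}. wt (imk P k))"
proof -
  have fin: "finite (sverts P)" using or by (simp add: is_oriented_signed_graph_def)
  let ?G = "{k \<in> PiE (sverts P) (\<lambda>_. {- int D..int D}). good P k}"
  have fG: "finite ?G"
    by (rule finite_subset[of _ "PiE (sverts P) (\<lambda>_. {- int D..int D})"]) (auto intro!: finite_PiE fin)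
  have Y: "Ycoeff P m = of_nat (card {k \<in> ?G. imk P k = m})" if m: "m \<in> MS D" for m
  proof -
    have "{\<kappa> \<in> sverts P \<rightarrow>\<^sub>E UNIV. proper_col P \<kappa> \<and> preserves P \<kappa> \<and> image_mset \<kappa> (mset_set (sverts P)) = m}
        = {k \<in> ?G. imk P k = m}"
    proof (intro set_eqI iffI)
      fix k assume "k \<in> {\<kappa> \<in> sverts P \<rightarrow>\<^sub>E UNIV. proper_col P \<kappa> \<and> preserves P \<kappa> \<and> image_mset \<kappa> (mset_set (sverts P)) = m}"
      then have k: "k \<in> sverts P \<rightarrow>\<^sub>E UNIV" "proper_col P k" "preserves P k" "imk P k = m"
        by (auto simp: imk_def)
      have "k ` sverts P \<subseteq> {- int D..int D}" using k(4) m fin by (auto simp: MS_def set_imk)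
      then show "k \<in> {k \<in> ?G. imk P k = m}" using k by (auto simp: good_def PiE_iff)
    next
      fix k assume "k \<in> {k \<in> ?G. imk P k = m}"
      then show "k \<in> {\<kappa> \<in> sverts P \<rightarrow>\<^sub>E UNIV. proper_col P \<kappa> \<and> preserves P \<kappa> \<and> image_mset \<kappa> (mset_set (sverts P)) = m}"
        by (auto simp: good_def PiE_iff imk_def)
    qed
    then show ?thesis by (simp add: Ycoeff_def)
  qed
  have "PhiD D (Ycoeff P) = (\<Sum>m\<in>MS D. \<Sum>k\<in>{k \<in> ?G. imk P k = m}. wt (imk P k))"
    unfolding PhiD_def
  proof (intro sum.cong refl)
    fix m assume m: "m \<in> MS D"
    have "(\<Sum>k\<in>{k \<in> ?G. imk P k = m}. wt (imk P k)) = (\<Sum>k\<in>{k \<in> ?G. imk P k = m}. wt m)" by simp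
    also have "\<dots> = of_nat (card {k \<in> ?G. imk P k = m}) * wt m" by simp
    finally show "smult (Ycoeff P m) (wt m) = (\<Sum>k\<in>{k \<in> ?G. imk P k = m}. wt (imk P k))"
      unfolding Y[OF m] by (simp add: of_nat_mult_conv_smult)
  qed
  also have "\<dots> = (\<Sum>k\<in>?G. wt (imk P k))"
  proof (rule sum.group[OF fG MS_finite])
    show "imk P ` ?G \<subseteq> MS D"
      using D fin by (auto simp: MS_def size_imk set_imk PiE_iff)
  qed
  finally show ?thesis .
qed

lemma Phi_Y:
  assumes sp: "signed_poset P" and D: "card (sverts P) \<le> D"
  shows "PhiD D (Ycoeff P) = monom 1 (nsinks P)"
proof -
  have or: "is_oriented_signed_graph P" using sp by (simp add: signed_poset_def)
  have fin: "finite (sverts P)" using or by (simp add: is_oriented_signed_graph_def)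
  let ?n = "card (sverts P)"
  let ?G = "{k \<in> PiE (sverts P) (\<lambda>_. {- int D..int D}). good P k}"
  have fG: "finite ?G"
    by (rule finite_subset[of _ "PiE (sverts P) (\<lambda>_. {- int D..int D})"]) (auto intro!: finite_PiE fin)
  have sub: "CK K P \<subseteq> ?G" if K: "K < Suc ?n" for K
  proof
    fix k assume k: "k \<in> CK K P"
    have b: "k v \<in> {- int D..int D}" if "v \<in> sverts P" for v
    proof -
      have "\<bar>k v\<bar> \<le> int D" using CK_bound[OF k that] K D by simp
      then show ?thesis by (simp add: abs_le_iff)
    qed
    have "k \<in> PiE (sverts P) (\<lambda>_. {- int D..int D})" using k b by (auto simp: CK_def PiE_iff)
    then show "k \<in> ?G" using k by (auto simp: CK_def)
  qed
  have "(\<Sum>k\<in>?G. wt (imk P k)) = (\<Sum>k\<in>(\<Union>K<Suc ?n. CK K P). wt (imk P k))"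
  proof (rule sum.mono_neutral_right[OF fG])
    show "(\<Union>K<Suc ?n. CK K P) \<subseteq> ?G" using sub by blast
    show "\<forall>k\<in>?G - (\<Union>K<Suc ?n. CK K P). wt (imk P k) = 0"
    proof
      fix k assume k: "k \<in> ?G - (\<Union>K<Suc ?n. CK K P)"
      show "wt (imk P k) = 0"
      proof (rule ccontr)
        assume "wt (imk P k) \<noteq> 0"
        then have c: "cmpr (imk P k)" unfolding wt_def by (cases "cmpr (imk P k)") simp_all
        have t0: "topK (imk P k) \<ge> 0" unfolding topK_def using fin by (simp add: set_imk Max_ge_iff)
        let ?K = "nat (topK (imk P k))"
        have "levels P k = {1..int ?K}" using c t0 fin by (simp add: cmpr_def levels_def set_imk image_image)
        then have kin: "k \<in> CK ?K P" using k by (auto simp: CK_def PiE_iff)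
        then have "?K < Suc ?n" using CK_empty_big[OF fin, of ?K] by (cases "?n < ?K") auto
        then show False using k kin by blast
      qed
    qed
  qed
  also have "\<dots> = (\<Sum>K<Suc ?n. \<Sum>k\<in>CK K P. wt (imk P k))"
  proof (rule sum.UNION_disjoint)
    show "finite {..<Suc ?n}" by simp
    show "\<forall>K\<in>{..<Suc ?n}. finite (CK K P)" using CK_finite[OF fin] by blast
    show "\<forall>i\<in>{..<Suc ?n}. \<forall>j\<in>{..<Suc ?n}. i \<noteq> j \<longrightarrow> CK i P \<inter> CK j P = {}"
    proof (intro ballI impI)
      fix i j :: nat assume "i \<noteq> j"
      show "CK i P \<inter> CK j P = {}"
      proof (rule ccontr)
        assume "CK i P \<inter> CK j P \<noteq> {}"
        then obtain k where "k \<in> CK i P" "k \<in> CK j P" by blast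
        then have "int i = int j" using CK_topK(1)[OF fin] by metis
        then show False using \<open>i \<noteq> j\<close> by simp
      qed
    qed
  qed
  also have "\<dots> = (\<Sum>K<Suc ?n. \<Sum>k\<in>CK K P. (-1) ^ (?n + K) +
     (if K \<ge> 1 \<and> botB (K - 1) P k = {} then tw (K - 1) ?n (card (topA (K - 1) P k)) else 0))"
    by (intro sum.cong refl wt_CK[OF fin]) 
  also have "\<dots> = (\<Sum>K<Suc ?n. of_nat (card (CK K P)) * (-1) ^ (?n + K)) +
     (\<Sum>K<Suc ?n. \<Sum>k\<in>CK K P. (if K \<ge> 1 \<and> botB (K - 1) P k = {} then tw (K - 1) ?n (card (topA (K - 1) P k)) else 0))"
    by (simp add: sum.distrib)
  also have "(\<Sum>K<Suc ?n. of_nat (card (CK K P)) * (-1) ^ (?n + K)) = (of_int (psiN (Suc ?n) P) :: rat poly)"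
    unfolding psiN_def by (simp add: add.commute mult.commute)
  also have "psiN (Suc ?n) P = 1" using psi_one[OF sp] by simp
  also have "(\<Sum>K<Suc ?n. \<Sum>k\<in>CK K P. (if K \<ge> 1 \<and> botB (K - 1) P k = {} then tw (K - 1) ?n (card (topA (K - 1) P k)) else 0)) = TN ?n P"
    unfolding TN_def by (subst sum.lessThan_Suc_shift) (simp cong: if_cong)
  also have "TN ?n P = [:0, 1:] ^ card {v. is_sink P v} - 1" using T_val[OF sp] by simp
  finally show ?thesis
    unfolding Phi_sum_k[OF or D] by (simp add: nsinks_def monom_altdef)
qed

lemma smult_sum_right: "smult c (\<Sum>i\<in>S. f i) = (\<Sum>i\<in>S. smult c (f i))"
  by (induction S rule: infinite_finite_induct) (simp_all add: smult_add_right)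

lemma PhiD_lin: "PhiD D (\<lambda>m. c * f m + g m) = smult c (PhiD D f) + PhiD D g"
  unfolding PhiD_def by (simp add: smult_add_left sum.distrib smult_sum_right)

lemma PhiD_zero: "PhiD D (\<lambda>m. 0) = 0"
  unfolding PhiD_def by simp

lemma PhiD_lincomb:
  "PhiD D (lincomb_Y L) = (\<Sum>(c, P) \<leftarrow> L. smult c (PhiD D (Ycoeff P)))"
proof (induction L)
  case Nil
  then show ?case by (simp add: lincomb_Y_def PhiD_zero)
next
  case (Cons x L)
  obtain c P where x: "x = (c, P)" by (cases x)
  have "lincomb_Y (x # L) = (\<lambda>m. c * Ycoeff P m + lincomb_Y L m)"
    by (simp add: lincomb_Y_def x)
  then show ?case using Cons by (simp add: PhiD_lin x)
qed

lemma PhiD_lincomb_sp: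
  assumes "\<forall>(c, P) \<in> set L. signed_poset P" "\<forall>(c, P) \<in> set L. card (sverts P) \<le> D"
  shows "PhiD D (lincomb_Y L) = phi_of L"
  using assms
proof (induction L)
  case Nil
  then show ?case by (simp add: lincomb_Y_def PhiD_zero phi_of_def)
next
  case (Cons x L)
  obtain c P where x: "x = (c, P)" by (cases x)
  have "PhiD D (Ycoeff P) = monom 1 (nsinks P)" using Cons.prems x by (intro Phi_Y) auto
  moreover have "PhiD D (lincomb_Y L) = phi_of L" using Cons by auto
  ultimately show ?case by (simp add: PhiD_lincomb phi_of_def x)
qed

lemma PhiD_sum: "finite A \<Longrightarrow> PhiD D (\<lambda>m. \<Sum>a\<in>A. f a m) = (\<Sum>a\<in>A. PhiD D (f a))"
  unfolding PhiD_def by (simp add: smult_sum sum.swap[of _ A])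

lemma PhiD_cmult: "PhiD D (\<lambda>m. c * f m) = smult c (PhiD D f)"
  using PhiD_lin[of D c f "\<lambda>m. 0"] by (simp add: PhiD_zero)

lemma wt_rep:
  assumes a: "a \<ge> 1"
  shows "wt (replicate_mset a i) = (if i = 0 then (-1) ^ a else if i = 1 then [:-1, 1:] ^ a - (-1) ^ a
            else if i = -1 then - ((-1) ^ a) else 0)"
proof -
  have s: "set_mset (replicate_mset a i) = {i}" using a by simp
  have t: "topK (replicate_mset a i) = \<bar>i\<bar>" unfolding topK_def s by simp
  have c: "cmpr (replicate_mset a i) \<longleftrightarrow> \<bar>i\<bar> \<le> 1"
  proof -
    have "({\<bar>i\<bar>} - {0} = {1..\<bar>i\<bar>}) \<longleftrightarrow> \<bar>i\<bar> \<le> 1"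
    proof
      assume eq: "{\<bar>i\<bar>} - {0} = {1..\<bar>i\<bar>}"
      show "\<bar>i\<bar> \<le> 1"
      proof (rule ccontr)
        assume nl: "\<not> \<bar>i\<bar> \<le> 1"
        then have "1 \<in> {1..\<bar>i\<bar>}" by simp
        then have "1 \<in> {\<bar>i\<bar>} - {0}" using eq by simp
        then have "\<bar>i\<bar> = 1" by simp
        then show False using nl by simp
      qed
    next
      assume "\<bar>i\<bar> \<le> 1"
      then have "\<bar>i\<bar> = 0 \<or> \<bar>i\<bar> = 1" by linarith
      then show "{\<bar>i\<bar>} - {0} = {1..\<bar>i\<bar>}" by (elim disjE) simp_all
    qed
    then show ?thesis unfolding cmpr_def s t by simp
  qed
  consider "i = 0" | "i = 1" | "i = -1" | "\<bar>i\<bar> > 1" by linarith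
  then show ?thesis
  proof cases
    case 1 then show ?thesis using c t by (simp add: wt_def)
  next
    case 2 then show ?thesis using c t a by (simp add: wt_def tw_def power_add)
  next
    case 3 then show ?thesis using c t a by (simp add: wt_def)
  next
    case 4
    then have "i \<noteq> 0" "i \<noteq> 1" "i \<noteq> -1" "\<not> cmpr (replicate_mset a i)" using c by auto
    then show ?thesis by (simp add: wt_def)
  qed
qed

lemma PhiD_pab:
  assumes a: "1 \<le> a" "a \<le> D"
  shows "PhiD D (pab a 0) = [:-1, 1:] ^ a - (-1) ^ a"
proof -
  let ?I = "{- int D..int D}"
  have fI: "finite ?I" by simp
  have D1: "1 \<le> D" using a by simp
  have pab: "pab a 0 m = of_nat (card {i \<in> ?I. replicate_mset a i = m})" if m: "m \<in> MS D" for m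
  proof -
    have "{i. m = replicate_mset a i + replicate_mset 0 (- i)} = {i \<in> ?I. replicate_mset a i = m}"
    proof (intro set_eqI iffI)
      fix i assume "i \<in> {i. m = replicate_mset a i + replicate_mset 0 (- i)}"
      then have mi: "m = replicate_mset a i" by simp
      then have "i \<in> set_mset m" using a by simp
      then show "i \<in> {i \<in> ?I. replicate_mset a i = m}" using m mi by (auto simp: MS_def)
    qed auto
    then show ?thesis by (simp add: pab_def)
  qed
  have "PhiD D (pab a 0) = (\<Sum>m\<in>MS D. \<Sum>i\<in>{i \<in> ?I. replicate_mset a i = m}. wt (replicate_mset a i))"
    unfolding PhiD_def
  proof (intro sum.cong refl)
    fix m assume m: "m \<in> MS D"
    have "(\<Sum>i\<in>{i \<in> ?I. replicate_mset a i = m}. wt (replicate_mset a i)) =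
          (\<Sum>i\<in>{i \<in> ?I. replicate_mset a i = m}. wt m)" by simp
    also have "\<dots> = of_nat (card {i \<in> ?I. replicate_mset a i = m}) * wt m" by simp
    finally show "smult (pab a 0 m) (wt m) = (\<Sum>i\<in>{i \<in> ?I. replicate_mset a i = m}. wt (replicate_mset a i))"
      unfolding pab[OF m] by (simp add: of_nat_mult_conv_smult)
  qed
  also have "\<dots> = (\<Sum>i\<in>?I. wt (replicate_mset a i))"
    by (rule sum.group[OF fI MS_finite]) (use a in \<open>auto simp: MS_def\<close>)
  also have "\<dots> = (\<Sum>i\<in>{-1, 0, 1}. wt (replicate_mset a i))"
    by (rule sum.mono_neutral_right) (use D1 a(1) in \<open>auto simp: wt_rep\<close>)
  also have "\<dots> = [:-1, 1:] ^ a - (-1) ^ a"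
    using a(1) by (simp add: wt_rep)
  finally show ?thesis .
qed

lemma PhiD_xi:
  assumes n: "1 \<le> n" "n \<le> D"
  shows "PhiD D (xi n) = monom 1 n"
proof -
  have "PhiD D (xi n) = (\<Sum>a = 1..n. smult (of_nat (n choose a)) (PhiD D (pab a 0)))"
    unfolding xi_def by (simp add: PhiD_sum PhiD_cmult)
  also have "\<dots> = (\<Sum>a = 1..n. of_nat (n choose a) * ([:-1, 1:] ^ a - (-1) ^ a))"
    using n by (intro sum.cong refl) (simp add: PhiD_pab of_nat_mult_conv_smult[symmetric])
  also have "\<dots> = (\<Sum>a = 0..n. of_nat (n choose a) * ([:-1, 1:] ^ a - (-1) ^ a))"
    by (subst sum.atLeast_Suc_atMost[of 0 n]) simp_all
  also have "\<dots> = (\<Sum>a\<le>n. of_nat (n choose a) * [:-1, 1:] ^ a * 1 ^ (n - a)) -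
                 (\<Sum>a\<le>n. of_nat (n choose a) * (-1) ^ a * 1 ^ (n - a))"
    unfolding atLeast0AtMost power_one mult_1_right right_diff_distrib by (rule sum_subtractf)
  also have "\<dots> = ([:-1, 1:] + 1) ^ n - ((-1) + 1) ^ n"
    by (simp only: binomial_ring)
  also have "\<dots> = [:0, 1:] ^ n" using n one_plus_tm1 by (simp add: add.commute)
  finally show ?thesis by (simp add: monom_altdef)
qed

definition path :: "nat \<Rightarrow> nat set \<Rightarrow> nat set \<Rightarrow> sposet" where
  "path a E R = \<lparr>sverts = {..<a}, sedges = E, sends = (\<lambda>j. (j, Suc j)), spos = (\<lambda>_. True),
     sarr = (\<lambda>j. (j \<in> R, j \<notin> R))\<rparr>"

lemma path_simps [simp]: "sverts (path a E R) = {..<a}" "sedges (path a E R) = E"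
  "sends (path a E R) = (\<lambda>j. (j, Suc j))" "spos (path a E R) = (\<lambda>_. True)"
  "sarr (path a E R) = (\<lambda>j. (j \<in> R, j \<notin> R))"
  by (simp_all add: path_def)

fun W :: "nat \<Rightarrow> (rat \<times> nat set \<times> nat set) list" where
  "W 0 = [(1, {}, {})]"
| "W (Suc k) = W k @ map (\<lambda>x. (- fst x, insert k (fst (snd x)), insert k (snd (snd x)))) (W k)
     @ map (\<lambda>x. (- fst x, insert k (fst (snd x)), snd (snd x))) (W k)"

lemma W_sub: "x \<in> set (W k) \<Longrightarrow> fst (snd x) \<subseteq> {..<k} \<and> snd (snd x) \<subseteq> {..<k}"
proof (induction k arbitrary: x)
  case 0
  then show ?case by simp
next
  case (Suc k)
  then show ?case by (fastforce dest: Suc.IH)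
qed

lemma sl_neg_cmult: "(\<Sum>x\<leftarrow>xs. - (c * f x)) = - (c * (\<Sum>x\<leftarrow>xs. f x))" for c :: rat
  by (induction xs) (simp_all add: algebra_simps)

definition goodER :: "nat set \<Rightarrow> nat set \<Rightarrow> (nat \<Rightarrow> int) \<Rightarrow> bool" where
  "goodER E R k \<longleftrightarrow> (\<forall>j\<in>E. (j \<in> R \<longrightarrow> k (Suc j) < k j) \<and> (j \<notin> R \<longrightarrow> k j < k (Suc j)))"

lemma good_path: "good (path a E R) k \<longleftrightarrow> goodER E R k"
  unfolding good_def proper_col_def preserves_def goodER_def sgnval_def by auto

lemma if_nest_lemma: "(if A then (if B then 1 else 0) else 0) = (if B \<and> A then 1 else (0::rat))"
  by auto

lemma trich_lemma:
  fixes S :: rat and x y :: int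
  shows "S - (if y < x then S else 0) - (if x < y then S else 0) = (if y = x then S else 0)"
  by auto

lemma W_sum:
  "(\<Sum>x\<leftarrow>W k. fst x * (if goodER (fst (snd x)) (snd (snd x)) \<kappa> then 1 else 0)) =
   (if \<forall>j\<le>k. \<kappa> j = \<kappa> 0 then 1 else 0)"
proof (induction k)
  case 0
  then show ?case by (simp add: goodER_def)
next
  case (Suc k)
  let ?S = "(\<Sum>x\<leftarrow>W k. fst x * (if goodER (fst (snd x)) (snd (snd x)) \<kappa> then 1 else (0::rat)))"
  have g1: "goodER (insert k (fst (snd x))) (insert k (snd (snd x))) \<kappa> \<longleftrightarrow>
      goodER (fst (snd x)) (snd (snd x)) \<kappa> \<and> \<kappa> (Suc k) < \<kappa> k" if "x \<in> set (W k)" for x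
    using W_sub[OF that] unfolding goodER_def by auto
  have g2: "goodER (insert k (fst (snd x))) (snd (snd x)) \<kappa> \<longleftrightarrow>
      goodER (fst (snd x)) (snd (snd x)) \<kappa> \<and> \<kappa> k < \<kappa> (Suc k)" if "x \<in> set (W k)" for x
    using W_sub[OF that] unfolding goodER_def by auto
  have s1: "(\<Sum>x\<leftarrow>W k. - fst x * (if goodER (insert k (fst (snd x))) (insert k (snd (snd x))) \<kappa> then 1 else 0)) =
      - (if \<kappa> (Suc k) < \<kappa> k then ?S else 0)"
  proof -
    have "(\<Sum>x\<leftarrow>W k. - fst x * (if goodER (insert k (fst (snd x))) (insert k (snd (snd x))) \<kappa> then 1 else 0)) =
        (\<Sum>x\<leftarrow>W k. - ((if \<kappa> (Suc k) < \<kappa> k then 1 else 0) * (fst x * (if goodER (fst (snd x)) (snd (snd x)) \<kappa> then 1 else (0::rat)))))"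
      by (intro arg_cong[where f = sum_list] map_cong refl) (simp add: g1)
    also have "\<dots> = - ((if \<kappa> (Suc k) < \<kappa> k then 1 else 0) * ?S)"
      by (rule sl_neg_cmult)
    also have "\<dots> = - (if \<kappa> (Suc k) < \<kappa> k then ?S else 0)" by simp
    finally show ?thesis .
  qed
  have s2: "(\<Sum>x\<leftarrow>W k. - fst x * (if goodER (insert k (fst (snd x))) (snd (snd x)) \<kappa> then 1 else 0)) =
      - (if \<kappa> k < \<kappa> (Suc k) then ?S else 0)"
  proof -
    have "(\<Sum>x\<leftarrow>W k. - fst x * (if goodER (insert k (fst (snd x))) (snd (snd x)) \<kappa> then 1 else 0)) =
        (\<Sum>x\<leftarrow>W k. - ((if \<kappa> k < \<kappa> (Suc k) then 1 else 0) * (fst x * (if goodER (fst (snd x)) (snd (snd x)) \<kappa> then 1 else (0::rat)))))"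
      by (intro arg_cong[where f = sum_list] map_cong refl) (simp add: g2)
    also have "\<dots> = - ((if \<kappa> k < \<kappa> (Suc k) then 1 else 0) * ?S)"
      by (rule sl_neg_cmult)
    also have "\<dots> = - (if \<kappa> k < \<kappa> (Suc k) then ?S else 0)" by simp
    finally show ?thesis .
  qed
  have "(\<Sum>x\<leftarrow>W (Suc k). fst x * (if goodER (fst (snd x)) (snd (snd x)) \<kappa> then 1 else 0)) =
      ?S - (if \<kappa> (Suc k) < \<kappa> k then ?S else 0) - (if \<kappa> k < \<kappa> (Suc k) then ?S else 0)"
    using s1 s2 by (simp add: comp_def)
  also have "\<dots> = (if \<kappa> (Suc k) = \<kappa> k then ?S else 0)"
    by (rule trich_lemma)
  also have "\<dots> = (if \<forall>j\<le>Suc k. \<kappa> j = \<kappa> 0 then 1 else 0)"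
  proof -
    have eq: "(\<forall>j\<le>Suc k. \<kappa> j = \<kappa> 0) \<longleftrightarrow> (\<forall>j\<le>k. \<kappa> j = \<kappa> 0) \<and> \<kappa> (Suc k) = \<kappa> k"
    proof
      assume h: "\<forall>j\<le>Suc k. \<kappa> j = \<kappa> 0"
      have h1: "\<kappa> (Suc k) = \<kappa> 0" using h[rule_format, of "Suc k"] by simp
      have h2: "\<kappa> k = \<kappa> 0" using h[rule_format, of k] by simp
      show "(\<forall>j\<le>k. \<kappa> j = \<kappa> 0) \<and> \<kappa> (Suc k) = \<kappa> k"
      proof (intro conjI allI impI)
        fix j assume "j \<le> k"
        then show "\<kappa> j = \<kappa> 0" using h[rule_format, of j] by simp
      next
        show "\<kappa> (Suc k) = \<kappa> k" using h1 h2 by simp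
      qed
    next
      assume h: "(\<forall>j\<le>k. \<kappa> j = \<kappa> 0) \<and> \<kappa> (Suc k) = \<kappa> k"
      have h1: "\<kappa> k = \<kappa> 0" using conjunct1[OF h] by blast
      show "\<forall>j\<le>Suc k. \<kappa> j = \<kappa> 0"
      proof (intro allI impI)
        fix j assume j: "j \<le> Suc k"
        show "\<kappa> j = \<kappa> 0"
        proof (cases "j = Suc k")
          case True
          then show ?thesis using conjunct2[OF h] h1 by simp
        next
          case False
          then have "j \<le> k" using j by simp
          then show ?thesis using conjunct1[OF h] by blast
        qed
      qed
    qed
    show ?thesis unfolding Suc.IH eq by (rule if_nest_lemma)
  qed
  finally show ?case .
qed

lemma cw_edge_ends:
  assumes cw: "closed_walk P ws es" and e: "e \<in> set es"
  shows "fst (sends P e) \<in> set ws \<and> snd (sends P e) \<in> set ws"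
proof -
  obtain i where i: "i < length es" "es ! i = e" using e by (auto simp: in_set_conv_nth)
  have len: "length ws = length es + 1" using cw by (simp add: closed_walk_def)
  have "sends P e = (ws ! i, ws ! (i + 1)) \<or> sends P e = (ws ! (i + 1), ws ! i)"
    using cw i by (auto simp: closed_walk_def)
  moreover have "ws ! i \<in> set ws" "ws ! (i + 1) \<in> set ws" using i len by auto
  ultimately show ?thesis by auto
qed

lemma path_signed:
  assumes E: "E \<subseteq> {j. Suc j < a}"
  shows "signed_poset (path a E R)"
proof -
  have fE: "finite E" using E by (rule finite_subset) (auto intro: finite_subset[of _ "{..<a}"])
  have or: "is_oriented_signed_graph (path a E R)"
    using E fE by (auto simp: is_oriented_signed_graph_def)
  have "\<not> is_cycle (path a E R) ws es" for ws es
  proof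
    assume c: "is_cycle (path a E R) ws es"
    then have cw: "closed_walk (path a E R) ws es" by (simp add: is_cycle_def)
    have ne: "ws \<noteq> []" using cw by (auto simp: closed_walk_def)
    define M where "M = Max (set ws)"
    have M: "M \<in> set ws" using ne by (simp add: M_def)
    have le: "w \<in> set ws \<Longrightarrow> w \<le> M" for w by (simp add: M_def)
    have ends: "e \<in> set es \<Longrightarrow> Suc e \<in> set ws" for e using cw_edge_ends[OF cw, of e] by simp
    have io: "has_in_arrow (path a E R) (set es) M" "has_out_arrow (path a E R) (set es) M"
      using c M by (auto simp: is_cycle_def)
    obtain e where e: "e \<in> set es" "(e = M \<and> e \<in> R) \<or> (Suc e = M \<and> e \<notin> R)"
      using io(1) by (auto simp: has_in_arrow_def)
    obtain e' where e': "e' \<in> set es" "(e' = M \<and> e' \<notin> R) \<or> (Suc e' = M \<and> e' \<in> R)"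
      using io(2) by (auto simp: has_out_arrow_def)
    have "e \<noteq> M" using le[OF ends[OF e(1)]] by auto
    moreover have "e' \<noteq> M" using le[OF ends[OF e'(1)]] by auto
    ultimately show False using e(2) e'(2) by auto
  qed
  then show ?thesis using or by (simp add: signed_poset_def)
qed

lemma sl_sum_swap: "(\<Sum>x\<leftarrow>xs. f x * (\<Sum>y\<in>A. g x y)) = (\<Sum>y\<in>A. \<Sum>x\<leftarrow>xs. f x * g x y)" for f :: "'a \<Rightarrow> rat"
  by (induction xs) (simp_all add: sum_distrib_left sum.distrib)

lemma Y_path_sum:
  "(\<Sum>x\<leftarrow>W k. fst x * Ycoeff (path (Suc k) (fst (snd x)) (snd (snd x))) m) = pab (Suc k) 0 m"
proof -
  let ?V = "{..<Suc k}"
  let ?A = "{\<kappa> \<in> ?V \<rightarrow>\<^sub>E UNIV. image_mset \<kappa> (mset_set ?V) = m}"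
  have fA: "finite ?A"
  proof (rule finite_subset[of _ "PiE ?V (\<lambda>_. set_mset m)"])
    show "?A \<subseteq> PiE ?V (\<lambda>_. set_mset m)"
    proof
      fix \<kappa> assume k: "\<kappa> \<in> ?A"
      then have e: "\<kappa> \<in> extensional ?V" and im: "image_mset \<kappa> (mset_set ?V) = m" by (auto simp: PiE_iff)
      have "\<forall>v\<in>?V. \<kappa> v \<in> set_mset m" using im by auto
      then show "\<kappa> \<in> PiE ?V (\<lambda>_. set_mset m)" using e by (simp add: PiE_iff)
    qed
  qed (auto intro!: finite_PiE)
  have Y: "Ycoeff (path (Suc k) E R) m = (\<Sum>\<kappa>\<in>?A. if goodER E R \<kappa> then 1 else 0)" for E R
  proof -
    have "{\<kappa> \<in> sverts (path (Suc k) E R) \<rightarrow>\<^sub>E UNIV. proper_col (path (Suc k) E R) \<kappa> \<and>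
        preserves (path (Suc k) E R) \<kappa> \<and> image_mset \<kappa> (mset_set (sverts (path (Suc k) E R))) = m}
        = {\<kappa> \<in> ?A. goodER E R \<kappa>}"
      using good_path[of "Suc k" E R] by (auto simp: good_def)
    then show ?thesis using fA by (simp add: Ycoeff_def sum.If_cases Int_def)
  qed
  have "(\<Sum>x\<leftarrow>W k. fst x * Ycoeff (path (Suc k) (fst (snd x)) (snd (snd x))) m) =
      (\<Sum>\<kappa>\<in>?A. \<Sum>x\<leftarrow>W k. fst x * (if goodER (fst (snd x)) (snd (snd x)) \<kappa> then 1 else 0))"
    unfolding Y by (rule sl_sum_swap)
  also have "\<dots> = (\<Sum>\<kappa>\<in>?A. if \<forall>j\<le>k. \<kappa> j = \<kappa> 0 then 1 else 0)"
    by (simp add: W_sum)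
  also have "\<dots> = of_nat (card {\<kappa> \<in> ?A. \<forall>j\<le>k. \<kappa> j = \<kappa> 0})"
    using fA by (simp add: sum.If_cases Int_def)
  also have "card {\<kappa> \<in> ?A. \<forall>j\<le>k. \<kappa> j = \<kappa> 0} = card {i. m = replicate_mset (Suc k) i}"
  proof (rule bij_betw_same_card[symmetric])
    have img: "image_mset (restrict (\<lambda>_. i) ?V) (mset_set ?V) = replicate_mset (Suc k) i" for i
    proof -
      have "image_mset (restrict (\<lambda>_. i) ?V) (mset_set ?V) = image_mset (\<lambda>_. i) (mset_set ?V)"
        by (intro image_mset_cong) auto
      then show ?thesis by (simp add: image_mset_const_eq)
    qed
    show "bij_betw (\<lambda>i. restrict (\<lambda>_. i) ?V) {i. m = replicate_mset (Suc k) i} {\<kappa> \<in> ?A. \<forall>j\<le>k. \<kappa> j = \<kappa> 0}"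
    proof (rule bij_betwI')
      fix i j assume "i \<in> {i. m = replicate_mset (Suc k) i}" "j \<in> {i. m = replicate_mset (Suc k) i}"
      show "(restrict (\<lambda>_. i) ?V = restrict (\<lambda>_. j) ?V) = (i = j)"
      proof
        assume "restrict (\<lambda>_. i) ?V = restrict (\<lambda>_. j) ?V"
        then have "restrict (\<lambda>_. i) ?V 0 = restrict (\<lambda>_. j) ?V 0" by simp
        then show "i = j" by simp
      qed simp
    next
      fix i assume i: "i \<in> {i. m = replicate_mset (Suc k) i}"
      have "restrict (\<lambda>_. i) ?V \<in> ?A" using img[of i] i by auto
      moreover have "\<forall>j\<le>k. restrict (\<lambda>_. i) ?V j = restrict (\<lambda>_. i) ?V 0" by simp
      ultimately show "restrict (\<lambda>_. i) ?V \<in> {\<kappa> \<in> ?A. \<forall>j\<le>k. \<kappa> j = \<kappa> 0}" by blast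
    next
      fix \<kappa> assume k: "\<kappa> \<in> {\<kappa> \<in> ?A. \<forall>j\<le>k. \<kappa> j = \<kappa> 0}"
      then have kA: "\<kappa> \<in> ?A" and kc: "\<forall>j\<le>k. \<kappa> j = \<kappa> 0" unfolding mem_Collect_eq by blast+
      have "\<kappa> = restrict (\<lambda>_. \<kappa> 0) ?V"
      proof
        fix v show "\<kappa> v = restrict (\<lambda>_. \<kappa> 0) ?V v"
        proof (cases "v < Suc k")
          case True
          then have "\<kappa> v = \<kappa> 0" using kc[rule_format, of v] by simp
          then show ?thesis using True by simp
        next
          case False
          then show ?thesis using kA by (auto simp: PiE_def extensional_def)
        qed
      qed
      moreover then have "m = replicate_mset (Suc k) (\<kappa> 0)"
        using kA img[of "\<kappa> 0"] by (metis (mono_tags, lifting) mem_Collect_eq)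
      ultimately show "\<exists>i\<in>{i. m = replicate_mset (Suc k) i}. \<kappa> = restrict (\<lambda>_. i) ?V" by blast
    qed
  qed
  finally show ?thesis by (simp add: pab_def)
qed

definition L0 :: "nat \<Rightarrow> (rat \<times> sposet) list" where
  "L0 n = concat (map (\<lambda>a. map (\<lambda>x. (of_nat (n choose a) * fst x, path a (fst (snd x)) (snd (snd x))))
       (W (a - 1))) [1..<Suc n])"

lemma L0_signed: "\<forall>(c, P) \<in> set (L0 n). signed_poset P"
proof -
  have "signed_poset P" if cP: "(c, P) \<in> set (L0 n)" for c P
  proof -
    obtain a x where a: "a \<in> set [1..<Suc n]" and x: "x \<in> set (W (a - 1))"
      and P: "P = path a (fst (snd x)) (snd (snd x))"
      using cP unfolding L0_def by auto
    have "fst (snd x) \<subseteq> {j. Suc j < a}" using W_sub[OF x] a by auto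
    then show ?thesis unfolding P by (rule path_signed)
  qed
  then show ?thesis by auto
qed

lemma lincomb_concat: "lincomb_Y (concat Ls) m = (\<Sum>L\<leftarrow>Ls. lincomb_Y L m)"
  by (induction Ls) (simp_all add: lincomb_Y_def)

lemma L0_blk:
  assumes a: "a \<in> set [1..<Suc n]"
  shows "lincomb_Y (map (\<lambda>x. (of_nat (n choose a) * fst x, path a (fst (snd x)) (snd (snd x)))) (W (a - 1))) m
     = of_nat (n choose a) * pab a 0 m"
proof -
  have "1 \<le> a" using a by auto
  then have a': "a = Suc (a - 1)" by simp
  have "lincomb_Y (map (\<lambda>x. (of_nat (n choose a) * fst x, path a (fst (snd x)) (snd (snd x)))) (W (a - 1))) m
      = (\<Sum>x\<leftarrow>W (a - 1). of_nat (n choose a) * (fst x * Ycoeff (path (Suc (a - 1)) (fst (snd x)) (snd (snd x))) m))"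
    unfolding lincomb_Y_def by (subst a') (simp add: comp_def mult.assoc)
  also have "\<dots> = of_nat (n choose a) * (\<Sum>x\<leftarrow>W (a - 1). fst x * Ycoeff (path (Suc (a - 1)) (fst (snd x)) (snd (snd x))) m)"
    by (simp add: sum_list_const_mult)
  also have "\<dots> = of_nat (n choose a) * pab a 0 m" using Y_path_sum[of "a - 1" m] a' by simp
  finally show ?thesis .
qed

lemma L0_xi: "lincomb_Y (L0 n) = xi n"
proof
  fix m
  have "lincomb_Y (L0 n) m = (\<Sum>a\<leftarrow>[1..<Suc n]. lincomb_Y (map (\<lambda>x. (of_nat (n choose a) * fst x,
        path a (fst (snd x)) (snd (snd x)))) (W (a - 1))) m)"
    unfolding L0_def lincomb_concat by (simp add: comp_def)
  also have "\<dots> = (\<Sum>a\<leftarrow>[1..<Suc n]. of_nat (n choose a) * pab a 0 m)"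
    by (intro arg_cong[where f = sum_list] map_cong refl L0_blk)
  also have "\<dots> = (\<Sum>a = 1..n. of_nat (n choose a) * pab a 0 m)"
    by (simp only: sum_set_upt_conv_sum_list_nat[symmetric] set_upt atLeastLessThanSuc_atLeastAtMost)
  finally show "lincomb_Y (L0 n) m = xi n m" by (simp add: xi_def)
qed

theorem lemma6p12:
  fixes n :: nat
  assumes "n \<ge> 1"
  shows "(\<exists>L. (\<forall>(c, P) \<in> set L. signed_poset P) \<and> lincomb_Y L = xi n) \<and>
         (\<forall>L. (\<forall>(c, P) \<in> set L. signed_poset P) \<and> lincomb_Y L = xi n
               \<longrightarrow> phi_of L = monom 1 n)"
proof (intro conjI allI impI)
  show "\<exists>L. (\<forall>(c, P) \<in> set L. signed_poset P) \<and> lincomb_Y L = xi n"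
    using L0_signed L0_xi by blast
next
  fix L assume h: "(\<forall>(c, P) \<in> set L. signed_poset P) \<and> lincomb_Y L = xi n"
  define D where "D = n + sum_list (map (\<lambda>x. card (sverts (snd x))) L)"
  have b: "\<forall>(c, P) \<in> set L. card (sverts P) \<le> D"
  proof (clarify)
    fix c P assume "(c, P) \<in> set L"
    then have "card (sverts P) \<le> sum_list (map (\<lambda>x. card (sverts (snd x))) L)"
      by (intro member_le_sum_list) (auto simp: image_iff intro!: bexI[of _ "(c, P)"])
    then show "card (sverts P) \<le> D" by (simp add: D_def)
  qed
  have "phi_of L = PhiD D (lincomb_Y L)" using PhiD_lincomb_sp[of L D] h b by simp
  also have "\<dots> = PhiD D (xi n)" using h by simp
  also have "\<dots> = monom 1 n" using assms by (intro PhiD_xi) (auto simp: D_def)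
  finally show "phi_of L = monom 1 n" .
qed

end
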